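(* Let $n\ge1$ and $\gamma=0$ (so $\beta=1$). Then for every $R>0$ the problem $$U''+\Big(\frac{n-1}{r}+\frac r2\Big)U'-\frac12U=0\ \text{ in }(R,\infty),\qquad U(R)=0,\qquad U'(R)=\sqrt2,$$ for $U\in C([R,\infty))\cap C^2((R,\infty))$ with values in $[0,\infty)$, has exactly one solution, given by $$U(r)=\frac{2\sqrt2}{R\,\mathbf W(\frac{R^2}{4})}e^{\frac{R^2-r^2}{4}}\Big[\mathbf M(\tfrac{n+1}{2},\tfrac n2,\tfrac{R^2}{4})\mathbf U(\tfrac{n+1}{2},\tfrac n2,\tfrac{r^2}{4})-\mathbf U(\tfrac{n+1}{2},\tfrac n2,\tfrac{R^2}{4})\mathbf M(\tfrac{n+1}{2},\tfrac n2,\tfrac{r^2}{4})\Big].$$ Furthermore, $U$ is positive and increasing in $(R,\infty)$ and $$\lim_{r\to\infty}\frac{U(r)}{r}=\frac{R^{n-1}}{2^{n-1/2}}\,\mathbf U(\tfrac{n+1}{2},\tfrac n2,\tfrac{R^2}{4}).$$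
   Context: $s\mapsto\mathbf M(a,b,s)$ is Kummer's confluent hypergeometric function $\sum_{k\ge0}\frac{(a)_k}{(b)_k}\frac{s^k}{k!}$ and $s\mapsto\mathbf U(a,b,s)$ is Tricomi's confluent hypergeometric function (the standard second solution of $sV''+(b-s)V'-aV=0$, with $\mathbf U(a,b,s)\sim s^{-a}$ as $s\to\infty$); $\mathbf W(s)$ is the Wronskian $\mathbf M\,\partial_s\mathbf U-\mathbf U\,\partial_s\mathbf M$ of $\mathbf M(\frac{n+1}{2},\frac n2,\cdot)$ and $\mathbf U(\frac{n+1}{2},\frac n2,\cdot)$. $U'(R)$ is the right derivative at $R$. *)

theory Defs
  imports "HOL-Analysis.Analysis"
begin

definition kummerM :: "real \<Rightarrow> real \<Rightarrow> real \<Rightarrow> real" where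
  "kummerM a b s = (\<Sum>k. pochhammer a k / pochhammer b k * s ^ k / fact k)"

text \<open>Tricomi's confluent hypergeometric function, via the standard integral
  representation (DLMF 13.4.4), valid for a > 0 and s > 0:
  U(a,b,s) = 1/Gamma(a) * integral_0^infty e^(-s t) t^(a-1) (1+t)^(b-a-1) dt.\<close>
definition tricomiU :: "real \<Rightarrow> real \<Rightarrow> real \<Rightarrow> real" where
  "tricomiU a b s = (1 / Gamma a) *
     integral {0..} (\<lambda>t. exp (- s * t) * t powr (a - 1) * (1 + t) powr (b - a - 1))"

definition wronskW :: "nat \<Rightarrow> real \<Rightarrow> real" where
  "wronskW n s =
     kummerM ((real n + 1) / 2) (real n / 2) s * deriv (tricomiU ((real n + 1) / 2) (real n / 2)) s
   - tricomiU ((real n + 1) / 2) (real n / 2) s * deriv (kummerM ((real n + 1) / 2) (real n / 2)) s"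

definition is_solution :: "nat \<Rightarrow> real \<Rightarrow> (real \<Rightarrow> real) \<Rightarrow> bool" where
  "is_solution n R U \<longleftrightarrow>
     continuous_on {R..} U \<and>
     (\<exists>U1 U2. (\<forall>r>R. (U has_real_derivative U1 r) (at r) \<and> (U1 has_real_derivative U2 r) (at r)
                      \<and> U2 r + ((real n - 1) / r + r / 2) * U1 r - U r / 2 = 0)
             \<and> continuous_on {R<..} U2) \<and>
     (\<forall>r\<ge>R. U r \<ge> 0) \<and>
     U R = 0 \<and>
     (U has_real_derivative sqrt 2) (at_right R)"

definition explicitU :: "nat \<Rightarrow> real \<Rightarrow> real \<Rightarrow> real" where
  "explicitU n R r =
     2 * sqrt 2 / (R * wronskW n (R^2/4)) * exp ((R^2 - r^2) / 4) *
     (kummerM ((real n + 1) / 2) (real n / 2) (R^2/4) * tricomiU ((real n + 1) / 2) (real n / 2) (r^2/4)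
      - tricomiU ((real n + 1) / 2) (real n / 2) (R^2/4) * kummerM ((real n + 1) / 2) (real n / 2) (r^2/4))"

end

theory Submission
  imports Defs "HOL-Real_Asymp.Real_Asymp"
begin

lemma gamma_scaled:
  fixes c s :: real
  assumes c: "c > 0" and s: "s > 0"
  shows "((\<lambda>t. t powr (c - 1) * exp (- s * t)) has_integral Gamma c / s powr c) {0<..}"
proof -
  define F where "F = (\<lambda>t::real. if t \<in> {0<..} then t powr (c - 1) / exp t else 0)"
  define G where "G = (\<lambda>t::real. if t \<in> {0<..} then t powr (c - 1) * exp (- s * t) else 0)"
  have "((\<lambda>t. t powr (c - 1) / exp t) has_integral Gamma c) {0..}"
    by (rule Gamma_integral_real[OF c])
  hence "((\<lambda>t. if t \<in> {0<..} then t powr (c - 1) / exp t else 0) has_integral Gamma c) {0..}"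
    by (rule has_integral_spike [of "{0}", rotated 2]) auto
  hence "((\<lambda>t. t powr (c - 1) / exp t) has_integral Gamma c) {0<..}"
    by (subst (asm) has_integral_restrict) auto
  hence FI: "(F has_integral Gamma c) UNIV"
    unfolding F_def by (subst has_integral_restrict_UNIV)
  have Fnn: "\<And>x. 0 \<le> F x" by (auto simp: F_def)
  have Gnn: "\<And>x. 0 \<le> G x" by (auto simp: G_def)
  from FI Fnn have Fm: "F \<in> borel_measurable lebesgue"
    and FN: "(\<integral>\<^sup>+ x. ennreal (F x) \<partial>lebesgue) = ennreal (Gamma c)"
    by (auto simp: has_integral_iff_nn_integral_lebesgue)
  have Geq: "F (0 + s * x) = s powr (c - 1) * G x" for x
    using s by (auto simp: F_def G_def powr_mult exp_minus field_simps zero_less_mult_iff)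
  have Gm: "G \<in> borel_measurable lebesgue"
  proof -
    have "(\<lambda>x. F (0 + s * x)) \<in> borel_measurable lebesgue"
      using borel_measurable_affine[OF Fm, of s 0] s by simp
    hence "(\<lambda>x. s powr (c - 1) * G x / s powr (c - 1)) \<in> borel_measurable lebesgue"
      unfolding Geq by measurable
    thus ?thesis using s by simp
  qed
  have "ennreal (Gamma c) = ennreal \<bar>s\<bar> * (\<integral>\<^sup>+ x. ennreal (F (0 + s * x)) \<partial>lebesgue)"
    using nn_integral_real_affine_lebesgue[of "\<lambda>x. ennreal (F x)" s 0] Fm s FN by auto
  also have "(\<integral>\<^sup>+ x. ennreal (F (0 + s * x)) \<partial>lebesgue) = ennreal (s powr (c - 1)) * (\<integral>\<^sup>+ x. ennreal (G x) \<partial>lebesgue)"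
    unfolding Geq using s Gnn Gm by (subst nn_integral_cmult[symmetric]) (auto simp: ennreal_mult)
  finally have "ennreal (Gamma c) = ennreal (s * s powr (c - 1)) * (\<integral>\<^sup>+ x. ennreal (G x) \<partial>lebesgue)"
    using s by (simp add: ennreal_mult mult.assoc)
  also have "s * s powr (c - 1) = s powr c"
    using s by (simp add: powr_diff)
  finally have eq: "ennreal (Gamma c) = ennreal (s powr c) * (\<integral>\<^sup>+ x. ennreal (G x) \<partial>lebesgue)" .
  have "(\<integral>\<^sup>+ x. ennreal (G x) \<partial>lebesgue) = ennreal (Gamma c / s powr c)"
  proof -
    have sp: "s powr c > 0" using s by simp
    have "ennreal (Gamma c / s powr c) = ennreal (Gamma c) / ennreal (s powr c)"
      using sp c by (simp add: divide_ennreal Gamma_real_pos)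
    also have "\<dots> = (\<integral>\<^sup>+ x. ennreal (G x) \<partial>lebesgue)"
      unfolding eq using sp by (subst mult.commute, intro ennreal_mult_divide_eq) auto
    finally show ?thesis by simp
  qed
  hence "(G has_integral Gamma c / s powr c) UNIV"
    using Gm Gnn c s by (subst has_integral_iff_nn_integral_lebesgue) (auto intro!: divide_nonneg_pos Gamma_real_pos)
  thus ?thesis unfolding G_def by (subst (asm) has_integral_restrict_UNIV)
qed

lemma integrable_bound0:
  fixes f g :: "real \<Rightarrow> real"
  assumes "continuous_on {0<..} f" "g integrable_on {0<..}" "\<And>t. t > 0 \<Longrightarrow> \<bar>f t\<bar> \<le> g t"
  shows "f integrable_on {0<..}"
proof (rule measurable_bounded_by_integrable_imp_integrable[OF _ assms(2)])
  show "f \<in> borel_measurable (lebesgue_on {0<..})"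
    by (rule continuous_imp_measurable_on_sets_lebesgue[OF assms(1)]) auto
qed (use assms(3) in auto)

lemma integral_pos_12:
  fixes f :: "real \<Rightarrow> real"
  assumes "continuous_on {0<..} f" "f integrable_on {0<..}" "\<And>t. t > 0 \<Longrightarrow> f t > 0"
  shows "integral {0<..} f > 0"
proof -
  have c12: "continuous_on {1..2} f" using assms(1) by (rule continuous_on_subset) auto
  obtain x where x: "x \<in> {1..2}" "\<And>y. y \<in> {1..2} \<Longrightarrow> f x \<le> f y"
    using continuous_attains_inf[OF compact_Icc _ c12] by auto
  have "f x > 0" using x assms(3) by auto
  have "integral {1..2::real} (\<lambda>_. f x) \<le> integral {1..2} f"
    by (rule integral_le) (use x c12 integrable_continuous_interval in auto)
  also have "\<dots> \<le> integral {0<..} f"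
    by (rule integral_subset_le) (use assms c12 integrable_continuous_interval in \<open>auto simp: less_imp_le\<close>)
  finally show ?thesis using \<open>f x > 0\<close> by simp
qed

definition hh :: "real \<Rightarrow> real \<Rightarrow> real \<Rightarrow> real" where
  "hh p q t = t powr (p - 1) * (1 + t) powr q"
definition Jf :: "real \<Rightarrow> real \<Rightarrow> nat \<Rightarrow> real \<Rightarrow> real \<Rightarrow> real" where
  "Jf p q k s t = t ^ k * exp (- s * t) * hh p q t"
definition JJ :: "real \<Rightarrow> real \<Rightarrow> nat \<Rightarrow> real \<Rightarrow> real" where
  "JJ p q k s = integral {0<..} (Jf p q k s)"

lemma hh_pos: "t > 0 \<Longrightarrow> hh p q t > 0"
  by (simp add: hh_def)

lemma hh_le: assumes "t > 0" "q \<le> 0" shows "hh p q t \<le> t powr (p - 1)"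
proof -
  have "(1 + t) powr q \<le> 1" using assms powr_mono[of q 0 "1+t"] by simp
  thus ?thesis unfolding hh_def using assms by (simp add: mult_left_le)
qed

lemma hh_ge: assumes "t > 0" "q \<le> 0" "q \<ge> -2" shows "hh p q t \<ge> t powr (p - 1) * (1 - 2 * t)"
proof -
  have "(1 + t) powr (-2) \<le> (1 + t) powr q" using assms by (intro powr_mono) auto
  moreover have "1 - 2 * t \<le> (1 + t) powr (-2)"
  proof -
    have e: "(1 - 2 * t) * (1 + t)^2 = 1 - t^2 * (3 + 2*t)" by (simp add: power2_eq_square algebra_simps)
    have "t^2 * (3 + 2*t) \<ge> 0" using assms by simp
    hence "(1 - 2 * t) * (1 + t)^2 \<le> 1" unfolding e by linarith
    hence "1 - 2 * t \<le> 1 / (1 + t)^2" using assms by (simp add: pos_le_divide_eq)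
    moreover have "(1 + t) powr (-2) = 1 / (1 + t)^2"
      using assms by (simp add: powr_minus powr_numeral divide_inverse)
    ultimately show ?thesis by simp
  qed
  ultimately have "1 - 2 * t \<le> (1 + t) powr q" by linarith
  thus ?thesis unfolding hh_def using assms by (intro mult_left_mono) auto
qed

lemma Jf_cont: "continuous_on {0<..} (Jf p q k s)"
  unfolding Jf_def hh_def by (intro continuous_intros) auto

lemma Jf_pos: "t > 0 \<Longrightarrow> Jf p q k s t > 0"
  unfolding Jf_def by (simp add: hh_pos)

lemma pow_powr_combine: "t > 0 \<Longrightarrow> t ^ k * t powr (p - 1) = t powr (real k + p - 1)"
  by (simp add: powr_realpow[symmetric] powr_add[symmetric] add_diff_eq)

lemma Jf_le: assumes "t > 0" "q \<le> 0"
  shows "Jf p q k s t \<le> t powr (real k + p - 1) * exp (- s * t)"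
proof -
  have "Jf p q k s t \<le> t ^ k * exp (- s * t) * t powr (p - 1)"
    unfolding Jf_def using hh_le[OF assms] assms by (intro mult_left_mono) auto
  also have "\<dots> = (t ^ k * t powr (p - 1)) * exp (- s * t)" by (simp add: algebra_simps)
  finally show ?thesis using pow_powr_combine[OF assms(1), of k p] by simp
qed

lemma Jf_ge: assumes "t > 0" "q \<le> 0" "q \<ge> -2"
  shows "Jf p q k s t \<ge> t powr (real k + p - 1) * exp (- s * t) - 2 * (t powr (real (Suc k) + p - 1) * exp (- s * t))"
proof -
  have "Jf p q k s t \<ge> t ^ k * exp (- s * t) * (t powr (p - 1) * (1 - 2 * t))"
    unfolding Jf_def using hh_ge[OF assms] assms by (intro mult_left_mono) auto
  also have "t ^ k * exp (- s * t) * (t powr (p - 1) * (1 - 2 * t))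
     = (t ^ k * t powr (p - 1)) * exp (- s * t) - 2 * ((t ^ Suc k * t powr (p - 1)) * exp (- s * t))"
    by (simp add: algebra_simps)
  finally show ?thesis using pow_powr_combine[OF assms(1), of k p] pow_powr_combine[OF assms(1), of "Suc k" p]
    by simp
qed

lemma Jf_integrable:
  assumes "p > 0" "q \<le> 0" "s > 0"
  shows "Jf p q k s integrable_on {0<..}"
proof (rule integrable_bound0[OF Jf_cont])
  show "(\<lambda>t. t powr (real k + p - 1) * exp (- s * t)) integrable_on {0<..}"
    using gamma_scaled[of "real k + p" s] assms by (auto simp: has_integral_integrable)
  show "\<bar>Jf p q k s t\<bar> \<le> t powr (real k + p - 1) * exp (- s * t)" if "t > 0" for t
    using Jf_le[OF that assms(2), of p k s] Jf_pos[OF that, of p q k s] by simp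
qed

lemma JJ_pos:
  assumes "p > 0" "q \<le> 0" "s > 0"
  shows "JJ p q k s > 0"
  unfolding JJ_def by (rule integral_pos_12[OF Jf_cont Jf_integrable[OF assms] Jf_pos])

lemma JJ_le:
  assumes "p > 0" "q \<le> 0" "s > 0"
  shows "JJ p q k s \<le> Gamma (real k + p) / s powr (real k + p)"
proof -
  have I: "((\<lambda>t. t powr (real k + p - 1) * exp (- s * t)) has_integral Gamma (real k + p) / s powr (real k + p)) {0<..}"
    using gamma_scaled[of "real k + p" s] assms by auto
  show ?thesis unfolding JJ_def
    by (rule has_integral_le[OF integrable_integral[OF Jf_integrable[OF assms]] I]) (use Jf_le assms in auto)
qed

lemma JJ_ge:
  assumes "p > 0" "q \<le> 0" "q \<ge> -2" "s > 0"
  shows "JJ p q k s \<ge> Gamma (real k + p) / s powr (real k + p) - 2 * (Gamma (real (Suc k) + p) / s powr (real (Suc k) + p))"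
proof -
  have I1: "((\<lambda>t. t powr (real k + p - 1) * exp (- s * t)) has_integral Gamma (real k + p) / s powr (real k + p)) {0<..}"
    using gamma_scaled[of "real k + p" s] assms by auto
  have I2: "((\<lambda>t. t powr (real (Suc k) + p - 1) * exp (- s * t)) has_integral Gamma (real (Suc k) + p) / s powr (real (Suc k) + p)) {0<..}"
    using gamma_scaled[of "real (Suc k) + p" s] assms by auto
  have I: "((\<lambda>t. t powr (real k + p - 1) * exp (- s * t) - 2 * (t powr (real (Suc k) + p - 1) * exp (- s * t))) has_integral
      Gamma (real k + p) / s powr (real k + p) - 2 * (Gamma (real (Suc k) + p) / s powr (real (Suc k) + p))) {0<..}"
    by (intro has_integral_diff has_integral_mult_right I1 I2)
  show ?thesis unfolding JJ_def
    by (rule has_integral_le[OF I integrable_integral[OF Jf_integrable[OF assms(1,2,4)]]]) (use Jf_ge assms in auto)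
qed

lemma exp_taylor2: "\<bar>exp z - 1 - z\<bar> \<le> z^2 * exp \<bar>z::real\<bar>"
proof -
  obtain t where t: "\<bar>t\<bar> \<le> \<bar>z\<bar>" "exp z = (\<Sum>m<2. z ^ m / fact m) + exp t / fact 2 * z ^ 2"
    using Maclaurin_exp_le[of z 2] by blast
  have e: "exp z - 1 - z = exp t / 2 * z^2" using t(2) by (simp add: numeral_2_eq_2)
  have "\<bar>exp z - 1 - z\<bar> = exp t / 2 * z^2" unfolding e by (rule abs_of_nonneg) simp
  also have "\<dots> \<le> exp \<bar>z\<bar> * z^2"
  proof -
    have "exp t \<le> exp \<bar>z\<bar>" using t(1) by simp
    hence "exp t / 2 \<le> exp \<bar>z\<bar>" using exp_gt_zero[of t] by linarith
    thus ?thesis by (intro mult_right_mono) auto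
  qed
  finally show ?thesis by (simp add: mult.commute)
qed

lemma exp_diff_bound:
  fixes x s t :: real
  assumes t: "t > 0" and xs: "\<bar>x - s\<bar> \<le> s / 2"
  shows "\<bar>exp (- x * t) - exp (- s * t) + (x - s) * (t * exp (- s * t))\<bar> \<le> (x - s)^2 * t^2 * exp (- (s / 2) * t)"
proof -
  define z where "z = (s - x) * t"
  have "exp (- s * t) * exp z = exp (- s * t + z)" using exp_add[of "- s * t" z] by simp
  also have "- s * t + z = - x * t" unfolding z_def by (simp add: algebra_simps)
  finally have e: "exp (- x * t) = exp (- s * t) * exp z" by simp
  have "exp (- x * t) - exp (- s * t) + (x - s) * (t * exp (- s * t)) = exp (- s * t) * (exp z - 1 - z)"
    unfolding e z_def by (simp add: algebra_simps)
  hence "\<bar>exp (- x * t) - exp (- s * t) + (x - s) * (t * exp (- s * t))\<bar> = exp (- s * t) * \<bar>exp z - 1 - z\<bar>"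
    by (simp add: abs_mult)
  also have "\<dots> \<le> exp (- s * t) * (z^2 * exp \<bar>z\<bar>)" by (intro mult_left_mono exp_taylor2) auto
  also have "\<dots> = z^2 * exp (- s * t + \<bar>z\<bar>)" using exp_add[of "- s * t" "\<bar>z\<bar>"] by simp
  also have "\<dots> \<le> z^2 * exp (- (s / 2) * t)"
  proof -
    have "\<bar>z\<bar> = \<bar>x - s\<bar> * t" unfolding z_def using t by (simp add: abs_mult abs_minus_commute)
    also have "\<dots> \<le> s / 2 * t" using xs t by (intro mult_right_mono) auto
    finally have "- s * t + \<bar>z\<bar> \<le> - (s / 2) * t" by simp
    thus ?thesis by (intro mult_left_mono) auto
  qed
  also have "z^2 = (x - s)^2 * t^2" unfolding z_def by (simp add: power_mult_distrib power2_commute)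
  finally show ?thesis .
qed

lemma Jf_diff_bound:
  assumes t: "t > 0" and xs: "\<bar>x - s\<bar> \<le> s / 2"
  shows "\<bar>Jf p q k x t - Jf p q k s t + (x - s) * Jf p q (Suc k) s t\<bar> \<le> (x - s)^2 * Jf p q (Suc (Suc k)) (s / 2) t"
proof -
  have "Jf p q k x t - Jf p q k s t + (x - s) * Jf p q (Suc k) s t
      = (t ^ k * hh p q t) * (exp (- x * t) - exp (- s * t) + (x - s) * (t * exp (- s * t)))"
    unfolding Jf_def by (simp add: algebra_simps)
  hence "\<bar>Jf p q k x t - Jf p q k s t + (x - s) * Jf p q (Suc k) s t\<bar>
      = (t ^ k * hh p q t) * \<bar>exp (- x * t) - exp (- s * t) + (x - s) * (t * exp (- s * t))\<bar>"
    using t hh_pos[OF t, of p q] by (simp add: abs_mult)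
  also have "\<dots> \<le> (t ^ k * hh p q t) * ((x - s)^2 * t^2 * exp (- (s / 2) * t))"
    using t hh_pos[OF t, of p q] by (intro mult_left_mono exp_diff_bound xs) auto
  also have "\<dots> = (x - s)^2 * Jf p q (Suc (Suc k)) (s / 2) t"
    unfolding Jf_def by (simp add: algebra_simps power2_eq_square)
  finally show ?thesis .
qed

lemma JJ_deriv:
  assumes p: "p > 0" and q: "q \<le> 0" and s: "s > 0"
  shows "(JJ p q k has_real_derivative - JJ p q (Suc k) s) (at s)"
proof -
  define C where "C = JJ p q (Suc (Suc k)) (s / 2)"
  have ev: "\<forall>\<^sub>F x in at s. norm ((JJ p q k x - JJ p q k s) / (x - s) - - JJ p q (Suc k) s) \<le> \<bar>x - s\<bar> * C"
  proof -
    have "\<forall>\<^sub>F x in at s. x \<noteq> s \<and> dist x s < s / 2"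
      using s unfolding eventually_at by (intro exI[of _ "s/2"]) auto
    thus ?thesis
    proof eventually_elim
      case (elim x)
      hence xs: "\<bar>x - s\<bar> \<le> s / 2" "x \<noteq> s" by (auto simp: dist_real_def)
      hence x: "x > 0" using s by (auto simp: abs_if split: if_splits)
      have Ix: "Jf p q k x integrable_on {0<..}" using Jf_integrable[OF p q x] .
      have Is: "Jf p q k s integrable_on {0<..}" using Jf_integrable[OF p q s] .
      have Is1: "Jf p q (Suc k) s integrable_on {0<..}" using Jf_integrable[OF p q s] .
      have Is2: "Jf p q (Suc (Suc k)) (s/2) integrable_on {0<..}" using Jf_integrable[OF p q] s by simp
      have eqI: "JJ p q k x - JJ p q k s + (x - s) * JJ p q (Suc k) s
          = integral {0<..} (\<lambda>t. Jf p q k x t - Jf p q k s t + (x - s) * Jf p q (Suc k) s t)"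
      proof -
        have "integral {0<..} (\<lambda>t. Jf p q k x t - Jf p q k s t + (x - s) * Jf p q (Suc k) s t)
           = integral {0<..} (\<lambda>t. Jf p q k x t - Jf p q k s t) + integral {0<..} (\<lambda>t. (x - s) * Jf p q (Suc k) s t)"
          by (rule integral_add) (use Ix Is has_integral_integrable[OF has_integral_mult_right[OF integrable_integral[OF Is1]]] in \<open>auto intro!: integrable_diff\<close>)
        also have "integral {0<..} (\<lambda>t. Jf p q k x t - Jf p q k s t) = JJ p q k x - JJ p q k s"
          unfolding JJ_def by (rule integral_diff[OF Ix Is])
        also have "integral {0<..} (\<lambda>t. (x - s) * Jf p q (Suc k) s t) = (x - s) * JJ p q (Suc k) s"
          unfolding JJ_def by (rule integral_mult_right)
        finally show ?thesis by simp
      qed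
      have "norm (integral {0<..} (\<lambda>t. Jf p q k x t - Jf p q k s t + (x - s) * Jf p q (Suc k) s t))
          \<le> integral {0<..} (\<lambda>t. (x - s)^2 * Jf p q (Suc (Suc k)) (s / 2) t)"
        by (rule integral_norm_bound_integral)
           (use Ix Is has_integral_integrable[OF has_integral_mult_right[OF integrable_integral[OF Is1]]]
              has_integral_integrable[OF has_integral_mult_right[OF integrable_integral[OF Is2]]] Jf_diff_bound xs
            in \<open>auto intro!: integrable_add integrable_diff\<close>)
      also have "\<dots> = (x - s)^2 * C" unfolding C_def JJ_def by simp
      finally have "\<bar>JJ p q k x - JJ p q k s + (x - s) * JJ p q (Suc k) s\<bar> \<le> (x - s)^2 * C"
        unfolding eqI by simp
      moreover have "(JJ p q k x - JJ p q k s) / (x - s) - - JJ p q (Suc k) s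
          = (JJ p q k x - JJ p q k s + (x - s) * JJ p q (Suc k) s) / (x - s)"
        using xs by (simp add: field_simps)
      ultimately show ?case using xs
        by (simp add: abs_divide pos_divide_le_eq power2_eq_square mult_ac)
    qed
  qed
  have lim0: "((\<lambda>x. \<bar>x - s\<bar> * C) \<longlongrightarrow> 0) (at s)"
    by (rule tendsto_eq_intros refl | simp)+
  show ?thesis
    unfolding has_field_derivative_iff
    by (subst Lim_null) (rule Lim_null_comparison[OF ev lim0])
qed

lemma JJ_asym:
  assumes p: "p > 0" and q: "q \<le> 0" "q \<ge> -2"
  shows "((\<lambda>s. s powr (real k + p) * JJ p q k s) \<longlongrightarrow> Gamma (real k + p)) at_top"
proof (rule tendsto_sandwich)
  define G1 where "G1 = 2 * Gamma (real (Suc k) + p)"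
  show "\<forall>\<^sub>F s in at_top. Gamma (real k + p) - G1 / s \<le> s powr (real k + p) * JJ p q k s"
    using eventually_gt_at_top[of 0]
  proof eventually_elim
    case (elim s)
    have "s powr (real k + p) * (Gamma (real k + p) / s powr (real k + p) - 2 * (Gamma (real (Suc k) + p) / s powr (real (Suc k) + p)))
       \<le> s powr (real k + p) * JJ p q k s"
      by (intro mult_left_mono JJ_ge p q elim) auto
    moreover have "s powr (real k + p) * (Gamma (real k + p) / s powr (real k + p) - 2 * (Gamma (real (Suc k) + p) / s powr (real (Suc k) + p)))
        = Gamma (real k + p) - G1 / s"
    proof -
      define sp where "sp = s powr (real k + p)"
      have sp: "sp > 0" unfolding sp_def using elim by simp
      have "s powr (real (Suc k) + p) = s * sp"
        unfolding sp_def using elim by (simp add: powr_add add_ac)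
      thus ?thesis unfolding sp_def[symmetric] G1_def using sp elim by (simp add: field_simps)
    qed
    ultimately show ?case by simp
  qed
  show "\<forall>\<^sub>F s in at_top. s powr (real k + p) * JJ p q k s \<le> Gamma (real k + p)"
    using eventually_gt_at_top[of 0]
  proof eventually_elim
    case (elim s)
    have "s powr (real k + p) * JJ p q k s \<le> s powr (real k + p) * (Gamma (real k + p) / s powr (real k + p))"
      by (intro mult_left_mono JJ_le p q elim) auto
    thus ?case using elim by simp
  qed
  show "((\<lambda>s. Gamma (real k + p) - G1 / s) \<longlongrightarrow> Gamma (real k + p)) at_top"
    by real_asymp
qed simp

lemma Jf_absint:
  assumes "p > 0" "q \<le> 0" "s > 0"
  shows "Jf p q k s absolutely_integrable_on {0<..}"
  by (rule nonnegative_absolutely_integrable_1[OF Jf_integrable[OF assms]]) (use Jf_pos in \<open>auto intro: less_imp_le\<close>)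

lemma JJ_ode:
  assumes p: "p > 0" and q: "q \<le> -1" and s: "s > 0"
  shows "p * JJ p q 0 s + (p + q + 1 - s) * JJ p q 1 s - s * JJ p q 2 s = 0"
proof -
  define b where "b = p + q + 1"
  define G where "G = (\<lambda>t::real. exp (- s * t) * t powr p * (1 + t) powr (q + 1))"
  define g where "g = (\<lambda>t. p * Jf p q 0 s t + (b - s) * Jf p q 1 s t - s * Jf p q 2 s t)"
  have q0: "q \<le> 0" using q by simp
  have deriv: "(G has_real_derivative g t) (at t)" if t: "t > 0" for t
  proof -
    have d1: "((\<lambda>t. t powr p) has_real_derivative p * t powr (p - 1)) (at t)"
      using t by (auto intro!: derivative_eq_intros)
    have d2: "((\<lambda>t. (1 + t) powr (q + 1)) has_real_derivative (q + 1) * (1 + t) powr q) (at t)"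
      using t by (auto intro!: derivative_eq_intros)
    have d3: "((\<lambda>t. exp (- s * t)) has_real_derivative - s * exp (- s * t)) (at t)"
      by (auto intro!: derivative_eq_intros)
    have D: "(G has_real_derivative
        ((- s * exp (- s * t)) * t powr p + (p * t powr (p - 1)) * exp (- s * t)) * (1 + t) powr (q + 1)
        + ((q + 1) * (1 + t) powr q) * (exp (- s * t) * t powr p)) (at t)"
      unfolding G_def by (intro DERIV_mult d1 d2 d3)
    have e1: "t powr p = t * t powr (p - 1)" using t by (simp add: powr_diff)
    have e2: "(1 + t) powr (q + 1) = (1 + t) * (1 + t) powr q" using t by (simp add: powr_add)
    show ?thesis
    proof (rule DERIV_cong[OF D])
      show "((- s * exp (- s * t)) * t powr p + (p * t powr (p - 1)) * exp (- s * t)) * (1 + t) powr (q + 1)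
        + ((q + 1) * (1 + t) powr q) * (exp (- s * t) * t powr p) = g t"
        unfolding g_def Jf_def hh_def e1 e2 b_def
        by (simp add: algebra_simps power2_eq_square)
    qed
  qed
  have gcont: "continuous_on {0<..} g"
    unfolding g_def using Jf_cont by (intro continuous_intros) auto
  have gabs: "g absolutely_integrable_on {0<..}"
    unfolding g_def using Jf_absint[OF p q0 s]
    by (intro set_integral_add set_integral_diff set_integrable_mult_right) auto
  have gset: "set_integrable lborel {0<..} g"
  proof -
    have m: "(\<lambda>x. indicat_real {0<..} x *\<^sub>R g x) \<in> borel_measurable borel"
      by (rule borel_measurable_continuous_on_indicator[OF _ gcont]) auto
    from gabs show ?thesis
      unfolding set_integrable_def using m by (subst (asm) integrable_completion) auto
  qed
  have ein: "einterval 0 \<infinity> = {0::real<..}" by (auto simp: einterval_def zero_ereal_def)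
  have FTC: "(LBINT x=0..\<infinity>. g x) = 0 - 0"
  proof (rule interval_integral_FTC_integrable[where F=G])
    show "(G has_vector_derivative g x) (at x)" if "0 < ereal x" "ereal x < \<infinity>" for x
      using deriv[of x] that by (simp add: has_real_derivative_iff_has_vector_derivative zero_ereal_def)
    show "isCont g x" if "0 < ereal x" "ereal x < \<infinity>" for x
      using gcont that by (simp add: continuous_on_eq_continuous_at zero_ereal_def)
    show "set_integrable lborel (einterval 0 \<infinity>) g" unfolding ein by (rule gset)
    show "((G \<circ> real_of_ereal) \<longlongrightarrow> 0) (at_right 0)"
      unfolding zero_ereal_def ereal_tendsto_simps G_def using p by real_asymp
    show "((G \<circ> real_of_ereal) \<longlongrightarrow> 0) (at_left \<infinity>)"
      unfolding ereal_tendsto_simps G_def using s q by real_asymp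
  qed simp
  have "(LBINT x=0..\<infinity>. g x) = integral {0<..} g"
    using interval_integral_eq_integral'[of 0 "\<infinity>" g] gset ein by simp
  also have "integral {0<..} g = p * JJ p q 0 s + (b - s) * JJ p q 1 s - s * JJ p q 2 s"
  proof -
    have I: "\<And>k. ((\<lambda>t. Jf p q k s t) has_integral JJ p q k s) {0<..}"
      unfolding JJ_def using Jf_integrable[OF p q0 s] by (simp add: integrable_integral)
    have "(g has_integral p * JJ p q 0 s + (b - s) * JJ p q 1 s - s * JJ p q 2 s) {0<..}"
      unfolding g_def by (intro has_integral_add has_integral_diff has_integral_mult_right I)
    thus ?thesis by (rule integral_unique)
  qed
  finally show ?thesis using FTC b_def by simp
qed

lemma tricomiU_JJ:
  "tricomiU a b s = JJ a (b - a - 1) 0 s / Gamma a"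
proof -
  have "integral {0..} (\<lambda>t. exp (- s * t) * t powr (a - 1) * (1 + t) powr (b - a - 1))
      = integral {0<..} (\<lambda>t. exp (- s * t) * t powr (a - 1) * (1 + t) powr (b - a - 1))"
    by (rule integral_spike_set) (auto intro: negligible_subset[OF negligible_sing[of 0]])
  also have "\<dots> = JJ a (b - a - 1) 0 s"
    unfolding JJ_def Jf_def hh_def by (simp add: mult_ac)
  finally show ?thesis unfolding tricomiU_def by simp
qed

definition cM :: "real \<Rightarrow> real \<Rightarrow> nat \<Rightarrow> real" where
  "cM a b k = pochhammer a k / pochhammer b k / fact k"

definition MM :: "real \<Rightarrow> real \<Rightarrow> nat \<Rightarrow> real \<Rightarrow> real" where
  "MM a b j s = (\<Sum>n. ((diffs ^^ j) (cM a b)) n * s ^ n)"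

lemma cM_Suc:
  assumes "b > 0"
  shows "cM a b (Suc n) = cM a b n * (a + n) / ((b + n) * (n + 1))"
proof -
  have "pochhammer b n > 0" using assms by (rule pochhammer_pos)
  moreover have "b + n > 0" using assms by simp
  ultimately show ?thesis
    unfolding cM_def by (simp add: pochhammer_Suc field_simps)
qed

lemma diffs_cM:
  assumes "b > 0"
  shows "diffs (cM a b) n = cM a b n * ((a + n) / (b + n))"
proof -
  have gen: "\<And>k P Q A B F::real. k \<noteq> 0 \<Longrightarrow> Q \<noteq> 0 \<Longrightarrow> B \<noteq> 0 \<Longrightarrow> F \<noteq> 0 \<Longrightarrow>
      k * (P * A / (Q * B) / (k * F)) = P / Q / F * (A / B)"
    by (simp add: field_simps)
  have "diffs (cM a b) n = of_nat (Suc n) * (pochhammer a (Suc n) / pochhammer b (Suc n) / fact (Suc n))"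
    by (simp add: diffs_def cM_def)
  also have "\<dots> = of_nat (Suc n) * (pochhammer a n * (a + n) / (pochhammer b n * (b + n)) / (of_nat (Suc n) * fact n))"
    by (simp only: pochhammer_Suc fact_Suc)
  also have "\<dots> = pochhammer a n / pochhammer b n / fact n * ((a + n) / (b + n))"
    by (rule gen) (use assms pochhammer_pos[OF assms, of n] in auto)
  finally show ?thesis unfolding cM_def .
qed

lemma diffs2_cM:
  assumes "b > 0"
  shows "diffs (diffs (cM a b)) n = cM a b n * ((a + n) / (b + n)) * ((a + n + 1) / (b + n + 1))"
proof -
  have "diffs (diffs (cM a b)) n = (n + 1) * diffs (cM a b) (Suc n)"
    by (simp add: diffs_def)
  also have "\<dots> = (n + 1) * cM a b (Suc n) * ((a + n + 1) / (b + n + 1))"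
    unfolding diffs_cM[OF assms] by (simp add: add_ac)
  also have "(n + 1) * cM a b (Suc n) = diffs (cM a b) n"
    by (simp add: diffs_def)
  finally show ?thesis unfolding diffs_cM[OF assms] .
qed

lemma cM_nonneg: "b > 0 \<Longrightarrow> a > 0 \<Longrightarrow> cM a b n > 0"
  unfolding cM_def by (simp add: pochhammer_pos)

lemma ratio_le: fixes a b x :: real assumes "0 < b" "b \<le> a" "0 \<le> x" shows "(a + x) / (b + x) \<le> a / b"
proof (rule mult_imp_div_pos_le)
  show "0 < b + x" using assms by simp
  have "x * b \<le> a * x" using assms by (simp add: mult_right_mono mult.commute)
  hence "x \<le> a * x / b" using assms by (simp add: le_divide_eq)
  thus "a + x \<le> a / b * (b + x)" using assms by (simp add: distrib_left)
qed

lemma cM_le: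
  assumes "0 < b" "b \<le> a"
  shows "cM a b n \<le> (a / b) ^ n / fact n"
proof (induction n)
  case 0 thus ?case by (simp add: cM_def)
next
  case (Suc n)
  have pos: "cM a b n \<ge> 0" using cM_nonneg[of b a n] assms by simp
  have "cM a b (Suc n) = cM a b n * ((a + n) / (b + n)) / (n + 1)"
    using cM_Suc[OF assms(1), of a n] by simp
  also have "\<dots> \<le> ((a / b) ^ n / fact n) * (a / b) / (n + 1)"
    using Suc pos ratio_le[OF assms, of n] assms
    by (intro divide_right_mono mult_mono) auto
  also have "\<dots> = (a / b) ^ Suc n / fact (Suc n)"
    by (simp add: field_simps)
  finally show ?case .
qed

lemma summable_bound_exp:
  fixes e :: "nat \<Rightarrow> real"
  assumes "\<And>n. \<bar>e n\<bar> \<le> C * (r ^ n / fact n)" "r \<ge> 0"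
  shows "summable (\<lambda>n. e n * y ^ n)"
proof (rule summable_comparison_test[where g="\<lambda>n. C * ((r * \<bar>y\<bar>) ^ n / fact n)"])
  show "\<exists>N. \<forall>n\<ge>N. norm (e n * y ^ n) \<le> C * ((r * \<bar>y\<bar>) ^ n / fact n)"
  proof (intro exI allI impI)
    fix n
    have "norm (e n * y ^ n) = \<bar>e n\<bar> * \<bar>y\<bar> ^ n" by (simp add: abs_mult power_abs)
    also have "\<dots> \<le> C * (r ^ n / fact n) * \<bar>y\<bar> ^ n"
      by (intro mult_right_mono assms) auto
    also have "\<dots> = C * ((r * \<bar>y\<bar>) ^ n / fact n)" by (simp add: power_mult_distrib)
    finally show "norm (e n * y ^ n) \<le> C * ((r * \<bar>y\<bar>) ^ n / fact n)" .
  qed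
  show "summable (\<lambda>n. C * ((r * \<bar>y\<bar>) ^ n / fact n))"
    using summable_exp[of "r * \<bar>y\<bar>"] by (intro summable_mult) (simp add: divide_inverse mult.commute)
qed

lemma summable_cM:
  assumes "0 < b" "b \<le> a" "j \<le> 3"
  shows "summable (\<lambda>n. ((diffs ^^ j) (cM a b)) n * y ^ n)"
proof -
  have a: "a > 0" using assms by simp
  have cpos: "\<And>n. cM a b n > 0" using cM_nonneg assms by auto
  have R: "\<And>x. x \<ge> 0 \<Longrightarrow> (a + x) / (b + x) \<le> a / b" using ratio_le[OF assms(1,2)] .
  have R0: "\<And>x. x \<ge> 0 \<Longrightarrow> (a + x) / (b + x) \<ge> 0" using assms by simp
  have ab: "a / b \<ge> 0" using assms by simp
  consider "j = 0" | "j = 1" | "j = 2" | "j = 3" using assms(3) by linarith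
  thus ?thesis
  proof cases
    case 1
    show ?thesis unfolding 1
      by (rule summable_bound_exp[where C=1 and r="a/b"]) (use cM_le[OF assms(1,2)] cpos ab in \<open>auto simp: abs_of_pos less_imp_le\<close>)
  next
    case 2
    show ?thesis unfolding 2
    proof (rule summable_bound_exp[where C="a/b" and r="a/b"])
      fix n :: nat
      have "\<bar>(diffs ^^ 1) (cM a b) n\<bar> = cM a b n * ((a + n) / (b + n))"
      proof -
        have "(diffs ^^ 1) (cM a b) n = cM a b n * ((a + n) / (b + n))" using diffs_cM[OF assms(1), of a n] by simp
        moreover have "cM a b n * ((a + n) / (b + n)) \<ge> 0" by (rule mult_nonneg_nonneg) (use cpos[of n] R0[of n] in auto)
        ultimately show ?thesis by (metis abs_of_nonneg)
      qed
      also have "\<dots> \<le> ((a / b) ^ n / fact n) * (a / b)"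
        using cM_le[OF assms(1,2), of n] cpos[of n] R[of n] R0[of n] by (intro mult_mono) auto
      finally show "\<bar>(diffs ^^ 1) (cM a b) n\<bar> \<le> a / b * ((a / b) ^ n / fact n)" by (simp add: mult_ac)
    qed (use ab in auto)
  next
    case 3
    show ?thesis unfolding 3
    proof (rule summable_bound_exp[where C="(a/b)^2" and r="a/b"])
      fix n :: nat
      have R1: "(a + n + 1) / (b + n + 1) \<le> a / b" "(a + n + 1) / (b + n + 1) \<ge> 0"
        using R[of "real n + 1"] R0[of "real n + 1"] by (simp_all add: add.assoc)
      have "\<bar>(diffs ^^ 2) (cM a b) n\<bar> = cM a b n * ((a + n) / (b + n)) * ((a + n + 1) / (b + n + 1))"
      proof -
        have "(diffs ^^ 2) (cM a b) n = cM a b n * ((a + n) / (b + n)) * ((a + n + 1) / (b + n + 1))"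
          using diffs2_cM[OF assms(1), of a n] by (simp add: numeral_2_eq_2)
        moreover have "cM a b n * ((a + n) / (b + n)) * ((a + n + 1) / (b + n + 1)) \<ge> 0"
          by (intro mult_nonneg_nonneg) (use cpos[of n] R0[of n] R1 in auto)
        ultimately show ?thesis by (metis abs_of_nonneg)
      qed
      also have "\<dots> \<le> ((a / b) ^ n / fact n) * (a / b) * (a / b)"
        using cM_le[OF assms(1,2), of n] cpos[of n] R[of n] R0[of n] R1 ab
        by (intro mult_mono) (use assms in \<open>auto intro!: mult_nonneg_nonneg divide_nonneg_nonneg\<close>)
      finally show "\<bar>(diffs ^^ 2) (cM a b) n\<bar> \<le> (a / b)^2 * ((a / b) ^ n / fact n)" by (simp add: mult_ac power2_eq_square)
    qed (use ab in auto)
  next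
    case 4
    show ?thesis unfolding 4
    proof (rule summable_bound_exp[where C="(a/b)^3" and r="a/b"])
      fix n :: nat
      have R1: "(a + n + 1) / (b + n + 1) \<le> a / b" "(a + n + 1) / (b + n + 1) \<ge> 0"
        using R[of "real n + 1"] R0[of "real n + 1"] by (simp_all add: add.assoc)
      have R2: "(a + n + 2) / (b + n + 2) \<le> a / b" "(a + n + 2) / (b + n + 2) \<ge> 0"
        using R[of "real n + 2"] R0[of "real n + 2"] by (simp_all add: add.assoc)
      have "(diffs ^^ 3) (cM a b) n = (n + 1) * diffs (diffs (cM a b)) (Suc n)"
        by (simp add: diffs_def numeral_3_eq_3)
      also have "\<dots> = (n + 1) * cM a b (Suc n) * ((a + (n+1)) / (b + (n+1))) * ((a + (n+1) + 1) / (b + (n+1) + 1))"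
        unfolding diffs2_cM[OF assms(1)] by simp
      also have "(n + 1) * cM a b (Suc n) = cM a b n * ((a + n) / (b + n))"
        using diffs_cM[OF assms(1), of a n] by (simp add: diffs_def)
      finally have e: "(diffs ^^ 3) (cM a b) n = cM a b n * ((a + n) / (b + n)) * ((a + n + 1) / (b + n + 1)) * ((a + n + 2) / (b + n + 2))"
        by (simp add: add_ac)
      have "\<bar>(diffs ^^ 3) (cM a b) n\<bar> = cM a b n * ((a + n) / (b + n)) * ((a + n + 1) / (b + n + 1)) * ((a + n + 2) / (b + n + 2))"
      proof -
        have "cM a b n * ((a + n) / (b + n)) * ((a + n + 1) / (b + n + 1)) * ((a + n + 2) / (b + n + 2)) \<ge> 0"
          by (intro mult_nonneg_nonneg) (use cpos[of n] R0[of n] R1 R2 in auto)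
        thus ?thesis unfolding e by (metis abs_of_nonneg)
      qed
      also have "\<dots> \<le> ((a / b) ^ n / fact n) * (a / b) * (a / b) * (a / b)"
        using cM_le[OF assms(1,2), of n] cpos[of n] R[of n] R0[of n] R1 R2 ab
        by (intro mult_mono) (use assms in \<open>auto intro!: mult_nonneg_nonneg divide_nonneg_nonneg\<close>)
      finally show "\<bar>(diffs ^^ 3) (cM a b) n\<bar> \<le> (a / b)^3 * ((a / b) ^ n / fact n)" by (simp add: mult_ac power3_eq_cube)
    qed (use ab in auto)
  qed
qed

lemma MM_deriv:
  assumes "0 < b" "b \<le> a" "j \<le> 2"
  shows "(MM a b j has_real_derivative MM a b (Suc j) s) (at s)"
proof -
  have "\<And>y. summable (\<lambda>n. ((diffs ^^ j) (cM a b)) n * y ^ n)"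
    using summable_cM[OF assms(1,2)] assms(3) by simp
  from termdiffs_strong_converges_everywhere[OF this]
  show ?thesis unfolding MM_def by simp
qed

lemma kummerM_MM: "kummerM a b s = MM a b 0 s"
  unfolding kummerM_def MM_def cM_def by (simp add: field_simps)

lemma MM_pos:
  assumes "0 < b" "b \<le> a" "s > 0" "j \<le> 1"
  shows "MM a b j s > 0"
proof -
  have a: "a > 0" using assms by simp
  have pos: "((diffs ^^ j) (cM a b)) n > 0" for n
  proof -
    have "j = 0 \<or> j = 1" using assms by auto
    thus ?thesis
    proof
      assume "j = 0" thus ?thesis using cM_nonneg[OF assms(1) a] by simp
    next
      assume "j = 1" thus ?thesis using cM_nonneg[OF assms(1) a, of n] diffs_cM[OF assms(1), of a n] assms
        by (simp add: add_pos_pos)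
    qed
  qed
  show ?thesis unfolding MM_def
    by (rule suminf_pos) (use summable_cM[OF assms(1,2)] assms pos in auto)
qed

lemma MM_ode:
  assumes "0 < b" "b \<le> a"
  shows "s * MM a b 2 s + (b - s) * MM a b 1 s - a * MM a b 0 s = 0"
proof -
  define c where "c = cM a b"
  define d1 where "d1 = diffs c"
  define d2 where "d2 = diffs d1"
  have S0: "(\<lambda>n. c n * s ^ n) sums MM a b 0 s"
    unfolding MM_def c_def using summable_cM[OF assms, of 0 s] by (simp add: summable_sums)
  have S1: "(\<lambda>n. d1 n * s ^ n) sums MM a b 1 s"
    unfolding MM_def c_def d1_def using summable_cM[OF assms, of 1 s] by (simp add: summable_sums)
  have S2: "(\<lambda>n. d2 n * s ^ n) sums MM a b 2 s"
    unfolding MM_def c_def d1_def d2_def using summable_cM[OF assms, of 2 s] by (simp add: summable_sums numeral_2_eq_2)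
  have T2: "(\<lambda>n. real n * d1 n * s ^ n) sums (s * MM a b 2 s)"
  proof -
    have "(\<lambda>n. s * (d2 n * s ^ n)) sums (s * MM a b 2 s)" by (rule sums_mult[OF S2])
    moreover have "(\<lambda>n. s * (d2 n * s ^ n)) = (\<lambda>n. (\<lambda>m. real m * d1 m * s ^ m) (Suc n))"
      unfolding d2_def diffs_def by (auto simp: fun_eq_iff algebra_simps)
    ultimately have "(\<lambda>n. (\<lambda>m. real m * d1 m * s ^ m) (Suc n)) sums (s * MM a b 2 s)" by simp
    thus ?thesis using sums_Suc_iff[of "\<lambda>m. real m * d1 m * s ^ m" "s * MM a b 2 s"] by simp
  qed
  have T1: "(\<lambda>n. real n * c n * s ^ n) sums (s * MM a b 1 s)"
  proof -
    have "(\<lambda>n. s * (d1 n * s ^ n)) sums (s * MM a b 1 s)" by (rule sums_mult[OF S1])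
    moreover have "(\<lambda>n. s * (d1 n * s ^ n)) = (\<lambda>n. (\<lambda>m. real m * c m * s ^ m) (Suc n))"
      unfolding d1_def diffs_def by (auto simp: fun_eq_iff algebra_simps)
    ultimately have "(\<lambda>n. (\<lambda>m. real m * c m * s ^ m) (Suc n)) sums (s * MM a b 1 s)" by simp
    thus ?thesis using sums_Suc_iff[of "\<lambda>m. real m * c m * s ^ m" "s * MM a b 1 s"] by simp
  qed
  have "(\<lambda>n. real n * d1 n * s ^ n + b * (d1 n * s ^ n) - real n * c n * s ^ n - a * (c n * s ^ n))
      sums (s * MM a b 2 s + b * MM a b 1 s - s * MM a b 1 s - a * MM a b 0 s)"
    by (intro sums_add sums_diff sums_mult T1 T2 S0 S1)
  moreover have "(\<lambda>n. real n * d1 n * s ^ n + b * (d1 n * s ^ n) - real n * c n * s ^ n - a * (c n * s ^ n)) = (\<lambda>n. 0)"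
  proof
    fix n
    have d: "d1 n = c n * ((a + n) / (b + n))" unfolding d1_def c_def by (rule diffs_cM[OF assms(1)])
    have bn: "b + n \<noteq> 0" using assms by simp
    have "real n * d1 n * s ^ n + b * (d1 n * s ^ n) - real n * c n * s ^ n - a * (c n * s ^ n)
        = ((b + n) * d1 n - (a + n) * c n) * s ^ n" by (simp add: algebra_simps)
    also have "(b + n) * d1 n - (a + n) * c n = 0" unfolding d using bn by simp
    finally show "real n * d1 n * s ^ n + b * (d1 n * s ^ n) - real n * c n * s ^ n - a * (c n * s ^ n) = 0"
      by simp
  qed
  ultimately have "(s * MM a b 2 s + b * MM a b 1 s - s * MM a b 1 s - a * MM a b 0 s) = 0"
    using sums_unique2 sums_zero by metis
  thus ?thesis by (simp add: algebra_simps)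
qed

lemma radial_ode:
  fixes w w1 w2 :: "real \<Rightarrow> real" and n :: nat and r :: real
  assumes d1: "\<And>s. s > 0 \<Longrightarrow> (w has_real_derivative w1 s) (at s)"
    and d2: "\<And>s. s > 0 \<Longrightarrow> (w1 has_real_derivative w2 s) (at s)"
    and ode: "\<And>s. s > 0 \<Longrightarrow> s * w2 s + (real n / 2 - s) * w1 s - (real n + 1) / 2 * w s = 0"
    and r: "r > 0"
  shows "((\<lambda>r. exp (- (r^2/4)) * w (r^2/4)) has_real_derivative
            exp (- (r^2/4)) * (r / 2) * (w1 (r^2/4) - w (r^2/4))) (at r)"
    and "((\<lambda>r. exp (- (r^2/4)) * (r / 2) * (w1 (r^2/4) - w (r^2/4))) has_real_derivative
            exp (- (r^2/4)) * ((1/2 - r^2/4) * (w1 (r^2/4) - w (r^2/4)) + r^2/4 * (w2 (r^2/4) - w1 (r^2/4)))) (at r)"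
    and "exp (- (r^2/4)) * ((1/2 - r^2/4) * (w1 (r^2/4) - w (r^2/4)) + r^2/4 * (w2 (r^2/4) - w1 (r^2/4)))
         + ((real n - 1) / r + r / 2) * (exp (- (r^2/4)) * (r / 2) * (w1 (r^2/4) - w (r^2/4)))
         - exp (- (r^2/4)) * w (r^2/4) / 2 = 0"
proof -
  define s where "s = r^2/4"
  have s: "s > 0" unfolding s_def using r by simp
  have ds: "((\<lambda>r. r^2/4) has_real_derivative r / 2) (at r)"
    by (auto intro!: derivative_eq_intros)
  have de: "((\<lambda>r. exp (- (r^2/4))) has_real_derivative exp (- (r^2/4)) * (- (r / 2))) (at r)"
    by (auto intro!: derivative_eq_intros)
  have dw: "((\<lambda>r. w (r^2/4)) has_real_derivative w1 (r^2/4) * (r / 2)) (at r)"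
    by (rule DERIV_chain2[OF d1 ds]) (use s in \<open>simp add: s_def\<close>)
  have dw1: "((\<lambda>r. w1 (r^2/4)) has_real_derivative w2 (r^2/4) * (r / 2)) (at r)"
    by (rule DERIV_chain2[OF d2 ds]) (use s in \<open>simp add: s_def\<close>)
  show "((\<lambda>r. exp (- (r^2/4)) * w (r^2/4)) has_real_derivative
            exp (- (r^2/4)) * (r / 2) * (w1 (r^2/4) - w (r^2/4))) (at r)"
    by (rule DERIV_cong[OF DERIV_mult[OF de dw]]) (simp add: algebra_simps)
  have dh: "((\<lambda>r. r / 2) has_real_derivative 1 / 2) (at r)"
    by (auto intro!: derivative_eq_intros)
  show "((\<lambda>r. exp (- (r^2/4)) * (r / 2) * (w1 (r^2/4) - w (r^2/4))) has_real_derivative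
            exp (- (r^2/4)) * ((1/2 - r^2/4) * (w1 (r^2/4) - w (r^2/4)) + r^2/4 * (w2 (r^2/4) - w1 (r^2/4)))) (at r)"
    by (rule DERIV_cong[OF DERIV_mult[OF DERIV_mult[OF de dh] DERIV_diff[OF dw1 dw]]])
       (simp add: field_simps power2_eq_square)
  define P where "P = (real n - 1) / r + r / 2"
  have key: "P * (r / 2) = (real n - 1) / 2 + s"
    unfolding s_def P_def using r by (simp add: field_simps power2_eq_square)
  have "exp (- (r^2/4)) * ((1/2 - r^2/4) * (w1 (r^2/4) - w (r^2/4)) + r^2/4 * (w2 (r^2/4) - w1 (r^2/4)))
         + P * (exp (- (r^2/4)) * (r / 2) * (w1 (r^2/4) - w (r^2/4)))
         - exp (- (r^2/4)) * w (r^2/4) / 2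
       = exp (- s) * ((1/2 - s) * (w1 s - w s) + s * (w2 s - w1 s)
         + (P * (r / 2)) * (w1 s - w s) - w s / 2)"
    unfolding s_def by (simp add: algebra_simps)
  also have "\<dots> = exp (- s) * (s * w2 s + (real n / 2 - s) * w1 s - (real n + 1) / 2 * w s)"
    unfolding key by (simp add: field_simps)
  also have "\<dots> = 0" using ode[OF s] by simp
  finally show "exp (- (r^2/4)) * ((1/2 - r^2/4) * (w1 (r^2/4) - w (r^2/4)) + r^2/4 * (w2 (r^2/4) - w1 (r^2/4)))
         + ((real n - 1) / r + r / 2) * (exp (- (r^2/4)) * (r / 2) * (w1 (r^2/4) - w (r^2/4)))
         - exp (- (r^2/4)) * w (r^2/4) / 2 = 0" unfolding P_def .
qed

definition aN :: "nat \<Rightarrow> real" where "aN n = (real n + 1) / 2"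
definition bN :: "nat \<Rightarrow> real" where "bN n = real n / 2"
definition qN :: "nat \<Rightarrow> real" where "qN n = bN n - aN n - 1"

definition Uf :: "nat \<Rightarrow> nat \<Rightarrow> real \<Rightarrow> real" where
  "Uf n j s = (- 1) ^ j * JJ (aN n) (qN n) j s / Gamma (aN n)"
definition Mf :: "nat \<Rightarrow> nat \<Rightarrow> real \<Rightarrow> real" where
  "Mf n j s = MM (aN n) (bN n) j s"

lemma aN_pos: "aN n > 0" unfolding aN_def by simp
lemma qN_val: "qN n = - 3 / 2" unfolding qN_def aN_def bN_def by (simp add: field_simps)
lemma bN_pos: "n \<ge> 1 \<Longrightarrow> bN n > 0" unfolding bN_def by simp
lemma bN_le_aN: "bN n \<le> aN n" unfolding bN_def aN_def by simp

lemma Uf_deriv: "s > 0 \<Longrightarrow> (Uf n j has_real_derivative Uf n (Suc j) s) (at s)"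
proof -
  assume s: "s > 0"
  have "(JJ (aN n) (qN n) j has_real_derivative - JJ (aN n) (qN n) (Suc j) s) (at s)"
    by (rule JJ_deriv[OF aN_pos _ s]) (simp add: qN_val)
  hence "((\<lambda>s. (- 1) ^ j / Gamma (aN n) * JJ (aN n) (qN n) j s) has_real_derivative
          (- 1) ^ j / Gamma (aN n) * (- JJ (aN n) (qN n) (Suc j) s)) (at s)"
    by (rule DERIV_cmult)
  thus ?thesis unfolding Uf_def by (simp add: field_simps)
qed

lemma Mf_deriv: "n \<ge> 1 \<Longrightarrow> j \<le> 2 \<Longrightarrow> (Mf n j has_real_derivative Mf n (Suc j) s) (at s)"
  unfolding Mf_def by (rule MM_deriv[OF bN_pos bN_le_aN])

lemma Uf_ode: "s > 0 \<Longrightarrow> s * Uf n 2 s + (real n / 2 - s) * Uf n 1 s - (real n + 1) / 2 * Uf n 0 s = 0"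
proof -
  assume s: "s > 0"
  define J0 where "J0 = JJ (aN n) (qN n) 0 s"
  define J1 where "J1 = JJ (aN n) (qN n) 1 s"
  define J2 where "J2 = JJ (aN n) (qN n) 2 s"
  define G where "G = Gamma (aN n)"
  have E: "aN n * J0 + (aN n + qN n + 1 - s) * J1 - s * J2 = 0"
    unfolding J0_def J1_def J2_def by (rule JJ_ode[OF aN_pos _ s]) (simp add: qN_val)
  have b: "aN n + qN n + 1 = real n / 2" unfolding qN_def bN_def by simp
  have G: "G \<noteq> 0" unfolding G_def using Gamma_real_pos[OF aN_pos[of n]] by simp
  have gen: "\<And>J0 J1 J2 G a b::real. G \<noteq> 0 \<Longrightarrow>
      s * (J2 / G) + (b - s) * (- J1 / G) - a * (J0 / G) = - (a * J0 + (b - s) * J1 - s * J2) / G"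
    by (simp add: field_simps)
  have "s * Uf n 2 s + (real n / 2 - s) * Uf n 1 s - (real n + 1) / 2 * Uf n 0 s
      = s * (J2 / G) + (real n / 2 - s) * (- J1 / G) - aN n * (J0 / G)"
    unfolding Uf_def J0_def J1_def J2_def G_def aN_def by simp
  also have "\<dots> = - (aN n * J0 + (real n / 2 - s) * J1 - s * J2) / G" by (rule gen[OF G])
  also have "\<dots> = 0" using E b by simp
  finally show ?thesis .
qed

lemma Mf_ode: "n \<ge> 1 \<Longrightarrow> s * Mf n 2 s + (real n / 2 - s) * Mf n 1 s - (real n + 1) / 2 * Mf n 0 s = 0"
  using MM_ode[OF bN_pos bN_le_aN, of n s] unfolding Mf_def aN_def bN_def by simp

lemma tricomiU_Uf: "tricomiU ((real n + 1) / 2) (real n / 2) = Uf n 0"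
  by (rule ext) (simp add: tricomiU_JJ Uf_def aN_def bN_def qN_def)

lemma kummerM_Mf: "kummerM ((real n + 1) / 2) (real n / 2) = Mf n 0"
  by (rule ext) (simp add: kummerM_MM Mf_def aN_def bN_def)

lemma Uf_pos: "s > 0 \<Longrightarrow> Uf n 0 s > 0"
  unfolding Uf_def using JJ_pos[where p="aN n" and q="qN n" and s=s and k=0] aN_pos[of n]
  by (simp add: qN_val Gamma_real_pos)

lemma Uf1_neg: "s > 0 \<Longrightarrow> Uf n 1 s < 0"
  unfolding Uf_def using JJ_pos[where p="aN n" and q="qN n" and s=s and k=1] aN_pos[of n]
  by (simp add: qN_val Gamma_real_pos)

lemma Mf_pos: "n \<ge> 1 \<Longrightarrow> s > 0 \<Longrightarrow> j \<le> 1 \<Longrightarrow> Mf n j s > 0"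
  unfolding Mf_def by (rule MM_pos[OF bN_pos bN_le_aN])

definition wRj :: "nat \<Rightarrow> real \<Rightarrow> nat \<Rightarrow> real \<Rightarrow> real" where
  "wRj n R j s = Mf n 0 (R^2/4) * Uf n j s - Uf n 0 (R^2/4) * Mf n j s"
definition WR :: "nat \<Rightarrow> real \<Rightarrow> real" where
  "WR n R = wRj n R 1 (R^2/4)"
definition KK :: "nat \<Rightarrow> real \<Rightarrow> real" where
  "KK n R = 2 * sqrt 2 / (R * WR n R) * exp (R^2/4)"
definition Y1f :: "nat \<Rightarrow> real \<Rightarrow> real \<Rightarrow> real" where
  "Y1f n R r = KK n R * (exp (- (r^2/4)) * (r / 2) * (wRj n R 1 (r^2/4) - wRj n R 0 (r^2/4)))"
definition Y2f :: "nat \<Rightarrow> real \<Rightarrow> real \<Rightarrow> real" where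
  "Y2f n R r = KK n R * (exp (- (r^2/4)) * ((1/2 - r^2/4) * (wRj n R 1 (r^2/4) - wRj n R 0 (r^2/4))
      + r^2/4 * (wRj n R 2 (r^2/4) - wRj n R 1 (r^2/4))))"

lemma wRj_deriv:
  assumes "n \<ge> 1" "s > 0" "j \<le> 2"
  shows "(wRj n R j has_real_derivative wRj n R (Suc j) s) (at s)"
  unfolding wRj_def
  by (intro DERIV_diff DERIV_cmult Uf_deriv Mf_deriv assms)

lemma wRj_ode:
  assumes "n \<ge> 1" "s > 0"
  shows "s * wRj n R 2 s + (real n / 2 - s) * wRj n R 1 s - (real n + 1) / 2 * wRj n R 0 s = 0"
proof -
  have "s * wRj n R 2 s + (real n / 2 - s) * wRj n R 1 s - (real n + 1) / 2 * wRj n R 0 s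
     = Mf n 0 (R^2/4) * (s * Uf n 2 s + (real n / 2 - s) * Uf n 1 s - (real n + 1) / 2 * Uf n 0 s)
     - Uf n 0 (R^2/4) * (s * Mf n 2 s + (real n / 2 - s) * Mf n 1 s - (real n + 1) / 2 * Mf n 0 s)"
    unfolding wRj_def by (simp add: algebra_simps)
  also have "\<dots> = 0" by (simp only: Uf_ode[OF assms(2), of n] Mf_ode[OF assms(1), of s])
  finally show ?thesis .
qed

lemma WR_neg:
  assumes "n \<ge> 1" "R > 0"
  shows "WR n R < 0"
proof -
  have s: "R^2/4 > 0" using assms by simp
  have "Mf n 0 (R^2/4) * Uf n 1 (R^2/4) < 0"
    using Mf_pos[OF assms(1) s, of 0] Uf1_neg[OF s] by (simp add: mult_pos_neg)
  moreover have "Uf n 0 (R^2/4) * Mf n 1 (R^2/4) > 0"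
    using Mf_pos[OF assms(1) s, of 1] Uf_pos[OF s] by simp
  ultimately show ?thesis unfolding WR_def wRj_def by simp
qed

lemma wronskW_WR:
  assumes "n \<ge> 1" "R > 0"
  shows "wronskW n (R^2/4) = WR n R"
proof -
  have s: "R^2/4 > 0" using assms by simp
  have "deriv (Uf n 0) (R^2/4) = Uf n 1 (R^2/4)" using DERIV_imp_deriv[OF Uf_deriv[OF s, of n 0]] by simp
  moreover have "deriv (Mf n 0) (R^2/4) = Mf n 1 (R^2/4)" using DERIV_imp_deriv[OF Mf_deriv[OF assms(1), of 0]] by simp
  ultimately show ?thesis
    unfolding wronskW_def WR_def wRj_def tricomiU_Uf kummerM_Mf by simp
qed

lemma explicitU_eq:
  assumes "n \<ge> 1" "R > 0"
  shows "explicitU n R = (\<lambda>r. KK n R * (exp (- (r^2/4)) * wRj n R 0 (r^2/4)))"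
proof
  fix r
  have "exp ((R^2 - r^2) / 4) = exp (R^2/4) * exp (- (r^2/4))"
    by (simp add: exp_add[symmetric] diff_divide_distrib)
  thus "explicitU n R r = KK n R * (exp (- (r^2/4)) * wRj n R 0 (r^2/4))"
    unfolding explicitU_def KK_def wRj_def wronskW_WR[OF assms] tricomiU_Uf kummerM_Mf
    by (simp add: mult_ac)
qed

lemma sol_deriv:
  assumes n: "n \<ge> 1" and R: "R > 0" and r: "r > 0"
  shows "(explicitU n R has_real_derivative Y1f n R r) (at r)"
    and "(Y1f n R has_real_derivative Y2f n R r) (at r)"
    and "Y2f n R r + ((real n - 1) / r + r / 2) * Y1f n R r - explicitU n R r / 2 = 0"
proof -
  have D0: "\<And>s. s > 0 \<Longrightarrow> (wRj n R 0 has_real_derivative wRj n R 1 s) (at s)"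
    using wRj_deriv[OF n, of _ 0] by simp
  have D1: "\<And>s. s > 0 \<Longrightarrow> (wRj n R 1 has_real_derivative wRj n R 2 s) (at s)"
    using wRj_deriv[OF n, of _ 1] by (simp add: numeral_2_eq_2)
  note RO = radial_ode[of "wRj n R 0" "wRj n R 1" "wRj n R 2" n r, OF D0 D1 wRj_ode[OF n] r]
  show "(explicitU n R has_real_derivative Y1f n R r) (at r)"
    unfolding explicitU_eq[OF n R] Y1f_def by (rule DERIV_cmult) (rule RO(1), auto)
  show "(Y1f n R has_real_derivative Y2f n R r) (at r)"
    unfolding Y2f_def Y1f_def[abs_def] by (rule DERIV_cmult) (rule RO(2), auto)
  have "Y2f n R r + ((real n - 1) / r + r / 2) * Y1f n R r - explicitU n R r / 2
    = KK n R * (exp (- (r^2/4)) * ((1/2 - r^2/4) * (wRj n R 1 (r^2/4) - wRj n R 0 (r^2/4)) + r^2/4 * (wRj n R 2 (r^2/4) - wRj n R 1 (r^2/4)))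
         + ((real n - 1) / r + r / 2) * (exp (- (r^2/4)) * (r / 2) * (wRj n R 1 (r^2/4) - wRj n R 0 (r^2/4)))
         - exp (- (r^2/4)) * wRj n R 0 (r^2/4) / 2)"
    unfolding Y2f_def Y1f_def explicitU_eq[OF n R] by (simp add: algebra_simps)
  also have "\<dots> = 0" using RO(3) by (auto simp del: divide_const_simps)
  finally show "Y2f n R r + ((real n - 1) / r + r / 2) * Y1f n R r - explicitU n R r / 2 = 0" .
qed

lemma Y2f_cont:
  assumes n: "n \<ge> 1" and R: "R > 0"
  shows "continuous_on {0<..} (Y2f n R)"
proof (rule continuous_at_imp_continuous_on, intro ballI)
  fix r :: real assume "r \<in> {0<..}"
  hence r: "r > 0" by simp
  have s: "r^2/4 > 0" using r by simp
  have c: "isCont (wRj n R j) (r^2/4)" if "j \<le> 2" for j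
    by (rule DERIV_isCont[OF wRj_deriv[OF n s that]])
  have c0: "isCont (\<lambda>r. wRj n R j (r^2/4)) r" if "j \<le> 2" for j
    using isCont_o2[where f="\<lambda>r. r^2/4" and a=r and g="wRj n R j"] c[OF that] by (auto intro!: continuous_intros)
  show "isCont (Y2f n R) r"
    unfolding Y2f_def[abs_def] using c0[of 0] c0[of 1] c0[of 2]
    by (auto intro!: continuous_intros)
qed

lemma Y1f_cont:
  assumes n: "n \<ge> 1" and R: "R > 0"
  shows "continuous_on {0<..} (Y1f n R)"
  by (rule continuous_at_imp_continuous_on) (auto intro!: DERIV_isCont sol_deriv(2)[OF n R])

lemma explicitU_R: "explicitU n R R = 0"
  unfolding explicitU_def by simp

lemma Y1f_R:
  assumes n: "n \<ge> 1" and R: "R > 0"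
  shows "Y1f n R R = sqrt 2"
proof -
  have W: "WR n R \<noteq> 0" using WR_neg[OF n R] by simp
  have "wRj n R 0 (R^2/4) = 0" unfolding wRj_def by simp
  hence "Y1f n R R = 2 * sqrt 2 / (R * WR n R) * (exp (R^2/4) * exp (- (R^2/4))) * (R / 2) * WR n R"
    unfolding Y1f_def KK_def WR_def by (simp add: mult_ac)
  also have "exp (R^2/4) * exp (- (R^2/4)) = 1" by (simp add: exp_minus)
  finally show ?thesis using W R by simp
qed

lemma ode_pos:
  fixes y y1 y2 p :: "real \<Rightarrow> real" and R :: real
  assumes R: "R > 0"
    and d1: "\<And>r. r > 0 \<Longrightarrow> (y has_real_derivative y1 r) (at r)"
    and d2: "\<And>r. r > 0 \<Longrightarrow> (y1 has_real_derivative y2 r) (at r)"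
    and ode: "\<And>r. r > 0 \<Longrightarrow> y2 r + p r * y1 r - y r / 2 = 0"
    and y0: "y R = 0" and y10: "y1 R > 0"
  shows "\<forall>r\<ge>R. y1 r > 0"
proof (rule ccontr)
  assume "\<not> (\<forall>r\<ge>R. y1 r > 0)"
  then obtain r1 where r1: "r1 \<ge> R" "y1 r1 \<le> 0" by (auto simp: not_less)
  define S where "S = {r. R \<le> r \<and> y1 r \<le> 0}"
  define r0 where "r0 = Inf S"
  have Sne: "S \<noteq> {}" using r1 unfolding S_def by auto
  have Sbdd: "bdd_below S" unfolding S_def by (auto intro!: bdd_belowI[of _ R])
  have r0le: "r0 \<le> x" if "x \<in> S" for x unfolding r0_def by (rule cInf_lower[OF that Sbdd])
  have r0ge: "R \<le> r0" unfolding r0_def by (rule cInf_greatest[OF Sne]) (auto simp: S_def)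
  have cont: "isCont y1 r" if "r > 0" for r using d2[OF that] by (rule DERIV_isCont)
  have below: "y1 r > 0" if "R \<le> r" "r < r0" for r
  proof (rule ccontr)
    assume "\<not> y1 r > 0" hence "r \<in> S" using that unfolding S_def by auto
    from r0le[OF this] that show False by simp
  qed
  have r0pos: "r0 > 0" using R r0ge by simp
  have nbhd: "\<exists>d>0. \<forall>x. \<bar>x - r0\<bar> < d \<longrightarrow> \<bar>y1 x - y1 r0\<bar> < e" if "e > 0" for e
    using cont[OF r0pos] that unfolding continuous_at_eps_delta by (auto simp: dist_real_def)
  have y1r0: "y1 r0 \<le> 0"
  proof (rule ccontr)
    assume "\<not> y1 r0 \<le> 0" hence pos: "y1 r0 > 0" by simp
    obtain d where d: "d > 0" "\<And>x. \<bar>x - r0\<bar> < d \<Longrightarrow> \<bar>y1 x - y1 r0\<bar> < y1 r0"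
      using nbhd[OF pos] by blast
    have "r0 + d \<le> Inf S"
    proof (rule cInf_greatest[OF Sne])
      fix x assume x: "x \<in> S"
      show "r0 + d \<le> x"
      proof (rule ccontr)
        assume "\<not> r0 + d \<le> x"
        moreover have "r0 \<le> x" using r0le[OF x] .
        ultimately have "\<bar>x - r0\<bar> < d" by simp
        with d(2) have "y1 x > 0" by force
        with x show False unfolding S_def by simp
      qed
    qed
    thus False using d(1) unfolding r0_def by simp
  qed
  have r0gt: "r0 > R" using r0ge y1r0 y10 by (cases "r0 = R") auto
  have y1r0_eq: "y1 r0 = 0"
  proof (rule ccontr)
    assume "y1 r0 \<noteq> 0" hence neg: "- y1 r0 > 0" using y1r0 by simp
    obtain d where d: "d > 0" "\<And>x. \<bar>x - r0\<bar> < d \<Longrightarrow> \<bar>y1 x - y1 r0\<bar> < - y1 r0"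
      using nbhd[OF neg] by blast
    define x where "x = max R (r0 - d / 2)"
    have x: "R \<le> x" "x < r0" "\<bar>x - r0\<bar> < d" using d r0gt unfolding x_def by auto
    have "y1 x < 0" using d(2)[OF x(3)] by force
    thus False using below x by force
  qed
  have yr0: "y r0 > 0"
  proof -
    obtain z where z: "z > R" "z < r0" "y r0 - y R = (r0 - R) * y1 z"
      using MVT2[OF r0gt, of y y1] d1 R by force
    have "y1 z > 0" using below z by simp
    thus ?thesis using z y0 r0gt by simp
  qed
  have "y2 r0 > 0" using ode[OF r0pos] y1r0_eq yr0 by simp
  then obtain d where d: "d > 0" "\<And>h. h > 0 \<Longrightarrow> h < d \<Longrightarrow> y1 (r0 - h) < y1 r0"
    using DERIV_pos_inc_left[OF d2[OF r0pos]] by blast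
  obtain m where hm: "m \<le> r0 - R" "m \<le> d" "0 < m" using d r0gt by (intro that[of "min d (r0 - R)"]) auto
  define h where "h = m / 2"
  have h1: "h > 0" using hm unfolding h_def by linarith
  have h2: "h < d" using hm unfolding h_def by linarith
  have h3: "R \<le> r0 - h" using hm unfolding h_def by linarith
  have h4: "r0 - h < r0" using h1 by linarith
  note h = h1 h2 h3 h4
  have "y1 (r0 - h) < 0" using d(2)[OF h(1,2)] y1r0_eq by simp
  moreover have "y1 (r0 - h) > 0" using below h by simp
  ultimately show False by simp
qed

lemma ode_pos_conseq:
  fixes y y1 :: "real \<Rightarrow> real" and R :: real
  assumes R: "R > 0"
    and d1: "\<And>r. r > 0 \<Longrightarrow> (y has_real_derivative y1 r) (at r)"
    and pos: "\<forall>r\<ge>R. y1 r > 0" and y0: "y R = 0"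
  shows "strict_mono_on {R<..} y" "\<And>r. r > R \<Longrightarrow> y r > 0" "\<And>r. r \<ge> R \<Longrightarrow> y r \<ge> 0"
proof -
  have inc: "y x < y z" if "R \<le> x" "x < z" for x z
  proof (rule DERIV_pos_imp_increasing[OF that(2)])
    fix u assume "x \<le> u" "u \<le> z"
    hence "u \<ge> R" "u > 0" using that R by auto
    thus "\<exists>v. (y has_real_derivative v) (at u) \<and> 0 < v" using d1 pos by blast
  qed
  show "strict_mono_on {R<..} y" by (rule strict_mono_onI) (use inc in auto)
  show "y r > 0" if "r > R" for r using inc[of R r] that y0 by simp
  thus "y r \<ge> 0" if "r \<ge> R" for r using that y0 by (cases "r = R") (auto intro: less_imp_le)
qed

lemma gen_distr: "(A::real) * D + B * D * C = (A + B * C) * D"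
  by (simp add: algebra_simps)

lemma gen_energy: "(A::real) \<le> 3 / 2 * S \<Longrightarrow> e \<ge> 0 \<Longrightarrow> A * e + S * (e * (- 3 / 2)) \<le> 0"
proof -
  assume h: "A \<le> 3 / 2 * S" "e \<ge> 0"
  have "A * e \<le> (3 / 2 * S) * e" using h by (rule mult_right_mono)
  moreover have "S * (e * (- 3 / 2)) = - ((3 / 2 * S) * e)" by simp
  ultimately show ?thesis by linarith
qed

lemma ode_unique:
  fixes w w1 w2 :: "real \<Rightarrow> real" and n :: nat and R :: real
  assumes n: "n \<ge> 1" and R: "R > 0" and wc: "continuous_on {R..} w"
    and d1: "\<And>r. r > R \<Longrightarrow> (w has_real_derivative w1 r) (at r)"
    and d2: "\<And>r. r > R \<Longrightarrow> (w1 has_real_derivative w2 r) (at r)"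
    and ode: "\<And>r. r > R \<Longrightarrow> w2 r + ((real n - 1) / r + r / 2) * w1 r - w r / 2 = 0"
    and w0: "w R = 0" and wd: "(w has_real_derivative 0) (at_right R)"
  shows "\<And>r. r \<ge> R \<Longrightarrow> w r = 0"
proof -
  define P where "P = (\<lambda>r::real. (real n - 1) * ln r + r^2/4)"
  have dP: "(P has_real_derivative (real n - 1) / r + r / 2) (at r)" if "r > 0" for r
    unfolding P_def using that by (auto intro!: derivative_eq_intros simp: field_simps power2_eq_square)
  define E where "E = (\<lambda>r. w1 r * exp (P r))"
  define g where "g = (\<lambda>r. w r / 2 * exp (P r))"
  have dE: "(E has_real_derivative g r) (at r)" if r: "r > R" for r
  proof -
    have "(E has_real_derivative w2 r * exp (P r) + ((real n - 1) / r + r / 2) * exp (P r) * w1 r) (at r)"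
      unfolding E_def using d2[OF r] dP[of r] r R by (auto intro!: derivative_eq_intros)
    moreover have "w2 r * exp (P r) + ((real n - 1) / r + r / 2) * exp (P r) * w1 r = g r"
    proof -
      have "w2 r * exp (P r) + ((real n - 1) / r + r / 2) * exp (P r) * w1 r
          = (w2 r + ((real n - 1) / r + r / 2) * w1 r) * exp (P r)"
        by (rule gen_distr)
      also have "w2 r + ((real n - 1) / r + r / 2) * w1 r = w r / 2" by (subst eq_iff_diff_eq_0) (rule ode[OF r])
      finally show ?thesis unfolding g_def .
    qed
    ultimately show ?thesis by simp
  qed
  have Pc: "continuous_on {R..} P" unfolding P_def using R by (auto intro!: continuous_intros)
  have gc: "continuous_on {R..R+1} g"
    unfolding g_def using continuous_on_subset[OF wc] continuous_on_subset[OF Pc]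
    by (auto intro!: continuous_intros)
  define F where "F = (\<lambda>x. E (R + 1) - integral {R..R+1} g + integral {R..x} g)"
  have Fc: "continuous_on {R..R+1} F"
    unfolding F_def using indefinite_integral_continuous_1[OF integrable_continuous_interval[OF gc]]
    by (auto intro!: continuous_intros)
  have dF: "(F has_real_derivative g x) (at x)" if "R < x" "x < R + 1" for x
  proof -
    have "((\<lambda>x. integral {R..x} g) has_real_derivative g x) (at x within {R..R+1})"
      by (rule integral_has_real_derivative[OF gc]) (use that in auto)
    hence "((\<lambda>x. integral {R..x} g) has_real_derivative g x) (at x)"
      using at_within_Icc_at[of R x "R+1"] that by simp
    thus ?thesis unfolding F_def by (auto intro!: derivative_eq_intros)
  qed
  have EF: "E x = F x" if "R < x" "x \<le> R + 1" for x
  proof (cases "x = R + 1")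
    case True thus ?thesis unfolding F_def by simp
  next
    case False
    hence x1: "x < R + 1" using that by simp
    have "(\<lambda>u. E u - F u) (R + 1) = (\<lambda>u. E u - F u) x"
    proof (rule DERIV_isconst_end[OF x1])
      have "continuous_on {x..R+1} E"
        by (rule continuous_at_imp_continuous_on) (use that in \<open>auto intro!: DERIV_isCont dE\<close>)
      moreover have "continuous_on {x..R+1} F" by (rule continuous_on_subset[OF Fc]) (use that in auto)
      ultimately show "continuous_on {x..R+1} (\<lambda>u. E u - F u)" by (intro continuous_intros)
      show "((\<lambda>u. E u - F u) has_real_derivative 0) (at u)" if "x < u" "u < R + 1" for u
        using DERIV_diff[OF dE dF, of u] that \<open>R < x\<close> by simp
    qed
    thus ?thesis unfolding F_def by simp
  qed
  have Elim: "(E \<longlongrightarrow> F R) (at_right R)"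
  proof -
    have "(F \<longlongrightarrow> F R) (at_right R)" by (rule continuous_on_Icc_at_rightD[OF Fc]) simp
    moreover have "\<forall>\<^sub>F x in at_right R. F x = E x"
      unfolding eventually_at_right_field by (intro exI[of _ "R + 1"]) (auto simp: EF)
    ultimately show ?thesis by (rule Lim_transform_eventually)
  qed
  define L where "L = F R * exp (- P R)"
  have w1lim: "(w1 \<longlongrightarrow> L) (at_right R)"
  proof -
    have "((\<lambda>x. E x * exp (- P x)) \<longlongrightarrow> F R * exp (- P R)) (at_right R)"
    proof (intro tendsto_intros Elim)
      have "isCont P R" using dP[of R] R by (auto intro: DERIV_isCont)
      thus "(P \<longlongrightarrow> P R) (at_right R)" by (simp add: isCont_def filterlim_at_split)
    qed
    moreover have "\<forall>\<^sub>F x in at_right R. E x * exp (- P x) = w1 x"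
      unfolding E_def by (simp add: exp_minus)
    ultimately show ?thesis unfolding L_def by (rule Lim_transform_eventually)
  qed
  have L0: "L = 0"
  proof -
    have q0: "((\<lambda>x. (w x - w R) / (x - R)) \<longlongrightarrow> 0) (at_right R)"
      using wd by (simp add: has_field_derivative_iff)
    have qL: "((\<lambda>x. (w x - w R) / (x - R)) \<longlongrightarrow> L) (at_right R)"
    proof (rule tendstoI)
      fix e :: real assume e: "e > 0"
      from tendstoD[OF w1lim e] obtain b where b: "b > R" "\<And>z. z > R \<Longrightarrow> z < b \<Longrightarrow> dist (w1 z) L < e"
        unfolding eventually_at_right_field by blast
      show "\<forall>\<^sub>F x in at_right R. dist ((w x - w R) / (x - R)) L < e"
        unfolding eventually_at_right_field
      proof (intro exI[of _ b] conjI allI impI)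
        show "b > R" by fact
        fix x assume x: "R < x" "x < b"
        have "continuous_on {R..x} w" by (rule continuous_on_subset[OF wc]) auto
        moreover have "w differentiable at u" if "R < u" "u < x" for u
          using d1[of u] that by (auto simp: real_differentiable_def)
        ultimately obtain l z where z: "R < z" "z < x" "(w has_real_derivative l) (at z)" "w x - w R = (x - R) * l"
          using MVT[OF x(1)] by blast
        have "l = w1 z" using DERIV_unique[OF z(3) d1[OF z(1)]] .
        hence "(w x - w R) / (x - R) = w1 z" using z(4) x by simp
        thus "dist ((w x - w R) / (x - R)) L < e" using b(2)[OF z(1)] z x by simp
      qed
    qed
    show ?thesis using tendsto_unique[OF trivial_limit_at_right_real qL q0] .
  qed
  define Q where "Q = (\<lambda>r. (w r ^ 2 + w1 r ^ 2) * exp (- 3 / 2 * r))"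
  have Qlim: "(Q \<longlongrightarrow> 0) (at_right R)"
  proof -
    have "(w \<longlongrightarrow> w R) (at R within {R..})" using wc by (simp add: continuous_on_def)
    hence "(w \<longlongrightarrow> 0) (at_right R)" using w0 by (rule_tac tendsto_within_subset) auto
    hence "((\<lambda>r. (w r ^ 2 + w1 r ^ 2) * exp (- 3 / 2 * r)) \<longlongrightarrow> (0 ^ 2 + 0 ^ 2) * exp (- 3 / 2 * R)) (at_right R)"
      using w1lim L0 by (intro tendsto_intros) (auto simp: filterlim_at_split tendsto_within_subset)
    thus ?thesis unfolding Q_def by simp
  qed
  have Qdec: "Q r \<le> Q t" if "R < t" "t \<le> r" for t r
  proof (rule DERIV_nonpos_imp_nonincreasing[OF that(2)])
    fix u assume u: "t \<le> u" "u \<le> r"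
    hence uR: "u > R" using that by simp
    have D: "(Q has_real_derivative (2 * w u * w1 u + 2 * w1 u * w2 u) * exp (- 3 / 2 * u)
        + (w u ^ 2 + w1 u ^ 2) * (exp (- 3 / 2 * u) * (- 3 / 2))) (at u)"
      unfolding Q_def using d1[OF uR] d2[OF uR] by (auto intro!: derivative_eq_intros simp: power2_eq_square field_simps)
    have p: "(real n - 1) / u + u / 2 \<ge> 0" using n uR R by (intro add_nonneg_nonneg divide_nonneg_pos) auto
    have w2e: "w2 u = w u / 2 - ((real n - 1) / u + u / 2) * w1 u" using ode[OF uR] by simp
    have "2 * w u * w1 u + 2 * w1 u * w2 u = 3 * w u * w1 u - 2 * ((real n - 1) / u + u / 2) * w1 u ^ 2"
      unfolding w2e by (simp add: algebra_simps power2_eq_square)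
    also have "\<dots> \<le> 3 * w u * w1 u"
    proof -
      have "0 \<le> 2 * ((real n - 1) / u + u / 2) * w1 u ^ 2" using p by (intro mult_nonneg_nonneg) auto
      thus ?thesis by linarith
    qed
    also have "\<dots> \<le> 3 / 2 * (w u ^ 2 + w1 u ^ 2)"
      using sum_squares_ge_zero[of "w u - w1 u" 0] by (simp add: algebra_simps power2_eq_square)
    finally have "(2 * w u * w1 u + 2 * w1 u * w2 u) * exp (- 3 / 2 * u)
        + (w u ^ 2 + w1 u ^ 2) * (exp (- 3 / 2 * u) * (- 3 / 2)) \<le> 0"
      by (rule gen_energy) simp
    thus "\<exists>y. (Q has_real_derivative y) (at u) \<and> y \<le> 0" using D by blast
  qed
  fix r assume r: "r \<ge> R"
  show "w r = 0"
  proof (cases "r = R")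
    case True thus ?thesis using w0 by simp
  next
    case False
    hence rR: "r > R" using r by simp
    have "Q r \<le> 0"
    proof (rule tendsto_le[OF trivial_limit_at_right_real Qlim tendsto_const])
      show "\<forall>\<^sub>F x in at_right R. Q r \<le> Q x"
        unfolding eventually_at_right_field by (intro exI[of _ r]) (use rR Qdec in auto)
    qed
    moreover have "Q r \<ge> 0" unfolding Q_def by simp
    ultimately have "Q r = 0" by linarith
    hence "(w r ^ 2 + w1 r ^ 2) * exp (- 3 / 2 * r) = 0" unfolding Q_def .
    hence "w r ^ 2 + w1 r ^ 2 = 0" by simp
    thus ?thesis by (simp add: sum_power2_eq_zero_iff)
  qed
qed

definition ps0 :: "nat \<Rightarrow> real \<Rightarrow> real" where
  "ps0 n r = exp (- (r^2/4)) * Uf n 0 (r^2/4)"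
definition ps1 :: "nat \<Rightarrow> real \<Rightarrow> real" where
  "ps1 n r = exp (- (r^2/4)) * (r / 2) * (Uf n 1 (r^2/4) - Uf n 0 (r^2/4))"
definition ps2 :: "nat \<Rightarrow> real \<Rightarrow> real" where
  "ps2 n r = exp (- (r^2/4)) * ((1/2 - r^2/4) * (Uf n 1 (r^2/4) - Uf n 0 (r^2/4))
      + r^2/4 * (Uf n 2 (r^2/4) - Uf n 1 (r^2/4)))"

lemma ps_deriv:
  assumes r: "r > 0"
  shows "(ps0 n has_real_derivative ps1 n r) (at r)"
    and "(ps1 n has_real_derivative ps2 n r) (at r)"
    and "ps2 n r + ((real n - 1) / r + r / 2) * ps1 n r - ps0 n r / 2 = 0"
proof -
  have D0: "\<And>s. s > 0 \<Longrightarrow> (Uf n 0 has_real_derivative Uf n 1 s) (at s)"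
    using Uf_deriv[of _ n 0] by simp
  have D1: "\<And>s. s > 0 \<Longrightarrow> (Uf n 1 has_real_derivative Uf n 2 s) (at s)"
    using Uf_deriv[of _ n 1] by (simp add: numeral_2_eq_2)
  note RO = radial_ode[of "Uf n 0" "Uf n 1" "Uf n 2" n r, OF D0 D1 Uf_ode r]
  show "(ps0 n has_real_derivative ps1 n r) (at r)"
    unfolding ps0_def[abs_def] ps1_def by (rule RO(1))
  show "(ps1 n has_real_derivative ps2 n r) (at r)"
    unfolding ps1_def[abs_def] ps2_def by (rule RO(2))
  show "ps2 n r + ((real n - 1) / r + r / 2) * ps1 n r - ps0 n r / 2 = 0"
    unfolding ps0_def ps1_def ps2_def by (rule RO(3))
qed

lemma ps0_pos: "r > 0 \<Longrightarrow> ps0 n r > 0"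
  unfolding ps0_def using Uf_pos[of "r^2/4" n] by simp

lemma wronsk_const:
  fixes y y1 y2 :: "real \<Rightarrow> real" and n :: nat and R r :: real
  assumes R: "R > 0" and r: "r \<ge> R"
    and d1: "\<And>r. r > 0 \<Longrightarrow> (y has_real_derivative y1 r) (at r)"
    and d2: "\<And>r. r > 0 \<Longrightarrow> (y1 has_real_derivative y2 r) (at r)"
    and ode: "\<And>r. r > 0 \<Longrightarrow> y2 r + ((real n - 1) / r + r / 2) * y1 r - y r / 2 = 0"
  shows "(y r * ps1 n r - ps0 n r * y1 r) * exp ((real n - 1) * ln r + r^2/4)
       = (y R * ps1 n R - ps0 n R * y1 R) * exp ((real n - 1) * ln R + R^2/4)"
proof (cases "r = R")
  case True thus ?thesis by simp
next
  case False
  hence rR: "R < r" using r by simp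
  define P where "P = (\<lambda>r::real. (real n - 1) * ln r + r^2/4)"
  define Z where "Z = (\<lambda>r. (y r * ps1 n r - ps0 n r * y1 r) * exp (P r))"
  have dZ: "(Z has_real_derivative 0) (at u)" if u: "u > 0" for u
  proof -
    have dP: "(P has_real_derivative (real n - 1) / u + u / 2) (at u)"
      unfolding P_def using u by (auto intro!: derivative_eq_intros simp: field_simps power2_eq_square)
    note D = DERIV_mult[OF DERIV_diff[OF DERIV_mult[OF d1[OF u] ps_deriv(2)[OF u, of n]]
               DERIV_mult[OF ps_deriv(1)[OF u, of n] d2[OF u]]] DERIV_chain2[OF DERIV_exp dP]]
    have e1: "ps2 n u = ps0 n u / 2 - ((real n - 1) / u + u / 2) * ps1 n u"
      using ps_deriv(3)[OF u, of n] by simp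
    have e2: "y2 u = y u / 2 - ((real n - 1) / u + u / 2) * y1 u"
      using ode[OF u] by simp
    show ?thesis unfolding Z_def
    proof (rule DERIV_cong[OF D])
      show "(y1 u * ps1 n u + ps2 n u * y u - (ps1 n u * y1 u + y2 u * ps0 n u)) * exp (P u)
          + exp (P u) * ((real n - 1) / u + u / 2) * (y u * ps1 n u - ps0 n u * y1 u) = 0"
        unfolding e1 e2 by (simp add: algebra_simps)
    qed
  qed
  have "Z r = Z R"
  proof (rule DERIV_isconst_end[OF rR])
    show "continuous_on {R..r} Z"
    proof (rule continuous_at_imp_continuous_on, intro ballI)
      fix x assume "x \<in> {R..r}"
      hence "x > 0" using R by simp
      thus "isCont Z x" using DERIV_isCont[OF dZ] by blast
    qed
    show "(Z has_real_derivative 0) (at x)" if "R < x" "x < r" for x using dZ that R by simp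
  qed
  thus ?thesis unfolding Z_def P_def .
qed

lemma Uf0_asym: "((\<lambda>s. s powr aN n * Uf n 0 s) \<longlongrightarrow> 1) at_top"
proof -
  have "((\<lambda>s. s powr (real 0 + aN n) * JJ (aN n) (qN n) 0 s) \<longlongrightarrow> Gamma (real 0 + aN n)) at_top"
    by (rule JJ_asym[OF aN_pos]) (auto simp: qN_val)
  hence "((\<lambda>s. s powr aN n * JJ (aN n) (qN n) 0 s / Gamma (aN n)) \<longlongrightarrow> Gamma (aN n) / Gamma (aN n)) at_top"
    by (intro tendsto_divide tendsto_const) (use Gamma_real_pos[OF aN_pos[of n]] in auto)
  moreover have "Gamma (aN n) \<noteq> 0" using Gamma_real_pos[OF aN_pos[of n]] by simp
  ultimately show ?thesis unfolding Uf_def by simp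
qed

lemma Uf1_asym: "((\<lambda>s. s powr (aN n + 1) * Uf n 1 s) \<longlongrightarrow> - Gamma (aN n + 1) / Gamma (aN n)) at_top"
proof -
  have "((\<lambda>s. s powr (real 1 + aN n) * JJ (aN n) (qN n) 1 s) \<longlongrightarrow> Gamma (real 1 + aN n)) at_top"
    by (rule JJ_asym[OF aN_pos]) (auto simp: qN_val)
  hence "((\<lambda>s. - (s powr (aN n + 1) * JJ (aN n) (qN n) 1 s) / Gamma (aN n)) \<longlongrightarrow> - Gamma (aN n + 1) / Gamma (aN n)) at_top"
    by (intro tendsto_divide tendsto_const tendsto_minus) (use Gamma_real_pos[OF aN_pos[of n]] in \<open>auto simp: add.commute\<close>)
  thus ?thesis unfolding Uf_def by simp
qed

lemma Dexpr_lim: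
  "((\<lambda>s. s powr (aN n - 1) * (Uf n 0 s - 2 * s * Uf n 1 s + 2 * s * Uf n 0 s)) \<longlongrightarrow> 2) at_top"
proof -
  have inf: "filterlim (\<lambda>s::real. s) at_infinity at_top"
    by (rule filterlim_at_top_imp_at_infinity[OF filterlim_ident])
  have "((\<lambda>s. s powr aN n * Uf n 0 s / s - 2 * (s powr (aN n + 1) * Uf n 1 s / s) + 2 * (s powr aN n * Uf n 0 s))
      \<longlongrightarrow> 0 - 2 * 0 + 2 * 1) at_top"
    by (intro tendsto_intros tendsto_divide_0[OF Uf0_asym inf] tendsto_divide_0[OF Uf1_asym inf] Uf0_asym)
  moreover have "\<forall>\<^sub>F s in at_top. s powr aN n * Uf n 0 s / s - 2 * (s powr (aN n + 1) * Uf n 1 s / s) + 2 * (s powr aN n * Uf n 0 s)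
      = s powr (aN n - 1) * (Uf n 0 s - 2 * s * Uf n 1 s + 2 * s * Uf n 0 s)"
    using eventually_gt_at_top[of 0]
  proof eventually_elim
    case (elim s)
    have e1: "s powr aN n = s powr (aN n - 1) * s" using elim by (simp add: powr_diff)
    have e2: "s powr (aN n + 1) = s powr (aN n - 1) * s * s" using elim by (simp add: powr_add powr_diff)
    show ?case unfolding e1 e2 using elim by (simp add: field_simps)
  qed
  ultimately show ?thesis by (simp add: Lim_transform_eventually)
qed

lemma ps0_le1:
  assumes r: "r \<ge> 2"
  shows "ps0 n r \<le> 1"
proof -
  define s where "s = r^2/4"
  have s1: "s \<ge> 1" unfolding s_def using r power_mono[of 2 r 2] by simp
  have "JJ (aN n) (qN n) 0 s \<le> Gamma (real 0 + aN n) / s powr (real 0 + aN n)"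
    by (rule JJ_le[OF aN_pos]) (use s1 in \<open>auto simp: qN_val\<close>)
  hence J: "JJ (aN n) (qN n) 0 s \<le> Gamma (aN n) / s powr aN n" by simp
  have G: "Gamma (aN n) > 0" using Gamma_real_pos[OF aN_pos[of n]] .
  have "Uf n 0 s = JJ (aN n) (qN n) 0 s / Gamma (aN n)" by (simp add: Uf_def)
  also have "\<dots> \<le> (Gamma (aN n) / s powr aN n) / Gamma (aN n)"
    by (rule divide_right_mono[OF J]) (use G in simp)
  also have "\<dots> = 1 / s powr aN n" using G by simp
  also have "\<dots> \<le> 1" using s1 aN_pos[of n] by (simp add: ge_one_powr_ge_zero)
  finally have U1: "Uf n 0 s \<le> 1" .
  have "exp (- s) \<le> 1" using s1 by simp
  hence "exp (- s) * Uf n 0 s \<le> 1 * 1"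
    using U1 Uf_pos[of s n] s1 by (intro mult_mono) auto
  thus ?thesis unfolding ps0_def s_def by simp
qed

lemma rpow_split:
  assumes r: "r > 0"
  shows "r powr (real n - 1) = 2 powr (real n - 1) * (r^2/4) powr (aN n - 1)"
proof -
  have "(r^2/4) = (r/2) powr 2" using r by (simp add: powr_numeral power_divide)
  hence "(r^2/4) powr (aN n - 1) = (r/2) powr (2 * (aN n - 1))" by (simp add: powr_powr)
  also have "2 * (aN n - 1) = real n - 1" unfolding aN_def by simp
  finally have "(r^2/4) powr (aN n - 1) = (r/2) powr (real n - 1)" .
  moreover have "(2 * (r/2)) powr (real n - 1) = 2 powr (real n - 1) * (r/2) powr (real n - 1)"
    using powr_mult[of 2 "r/2" "real n - 1"] r by simp
  ultimately show ?thesis by simp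
qed

lemma explicit_limit:
  assumes n: "n \<ge> 1" and R: "R > 0"
  shows "((\<lambda>r. explicitU n R r / r) \<longlongrightarrow>
         R ^ (n - 1) / 2 powr (real n - 1/2) * tricomiU ((real n + 1) / 2) (real n / 2) (R^2/4)) at_top"
proof -
  define y where "y = explicitU n R"
  define y1 where "y1 = Y1f n R"
  define y2 where "y2 = Y2f n R"
  have d1: "\<And>r. r > 0 \<Longrightarrow> (y has_real_derivative y1 r) (at r)"
    unfolding y_def y1_def using sol_deriv(1)[OF n R] .
  have d2: "\<And>r. r > 0 \<Longrightarrow> (y1 has_real_derivative y2 r) (at r)"
    unfolding y2_def y1_def using sol_deriv(2)[OF n R] .
  have ode: "\<And>r. r > 0 \<Longrightarrow> y2 r + ((real n - 1) / r + r / 2) * y1 r - y r / 2 = 0"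
    unfolding y_def y1_def y2_def using sol_deriv(3)[OF n R] .
  define P where "P = (\<lambda>r::real. (real n - 1) * ln r + r^2/4)"
  define c0 where "c0 = (y R * ps1 n R - ps0 n R * y1 R) * exp (P R)"
  define UR where "UR = Uf n 0 (R^2/4)"
  have c0v: "c0 = - (sqrt 2 * UR * R powr (real n - 1))"
  proof -
    have "exp (P R) = R powr (real n - 1) * exp (R^2/4)"
      unfolding P_def using R by (simp add: exp_add powr_def)
    moreover have "exp (- (R^2/4)) * exp (R^2/4) = 1" by (simp add: exp_minus)
    ultimately show ?thesis
      unfolding c0_def y_def y1_def ps0_def UR_def
      using explicitU_R[of n R] Y1f_R[OF n R]
      by (simp add: mult_ac)
  qed
  have W: "y r * ps1 n r - ps0 n r * y1 r = c0 * exp (- P r)" if r: "r \<ge> R" for r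
  proof -
    have "(y r * ps1 n r - ps0 n r * y1 r) * exp (P r) = c0"
      unfolding c0_def P_def by (rule wronsk_const[OF R r d1 d2 ode])
    thus ?thesis by (simp add: exp_minus field_simps)
  qed
  define Ex where "Ex = (\<lambda>r. Uf n 0 (r^2/4) - 2 * (r^2/4) * Uf n 1 (r^2/4) + 2 * (r^2/4) * Uf n 0 (r^2/4))"
  have Expos: "Ex r > 0" if "r > 0" for r
  proof -
    have s: "r^2/4 > 0" using that by simp
    have "2 * (r^2/4) * Uf n 1 (r^2/4) < 0" using Uf1_neg[OF s, of n] s by (simp add: mult_pos_neg)
    moreover have "2 * (r^2/4) * Uf n 0 (r^2/4) > 0" using Uf_pos[OF s, of n] s by simp
    ultimately show ?thesis unfolding Ex_def using Uf_pos[OF s, of n] by linarith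
  qed
  have psdiff: "ps0 n r - r * ps1 n r = exp (- (r^2/4)) * Ex r" for r
    unfolding ps0_def ps1_def Ex_def by (simp add: algebra_simps power2_eq_square)
  define f where "f = (\<lambda>r. y r / ps0 n r)"
  define g where "g = (\<lambda>r::real. r / ps0 n r)"
  define f' where "f' = (\<lambda>r. (y1 r * ps0 n r - y r * ps1 n r) / (ps0 n r * ps0 n r))"
  define g' where "g' = (\<lambda>r. (1 * ps0 n r - r * ps1 n r) / (ps0 n r * ps0 n r))"
  define V where "V = - c0 / (2 powr (real n - 1) * 2)"
  have Df: "\<forall>\<^sub>F r in at_top. (f has_real_derivative f' r) (at r)"
    using eventually_gt_at_top[of 0]
  proof eventually_elim
    case (elim r)
    show ?case unfolding f_def f'_def
      by (rule DERIV_divide[OF d1[OF elim] ps_deriv(1)[OF elim]]) (use ps0_pos[OF elim, of n] in simp)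
  qed
  have Dg: "\<forall>\<^sub>F r in at_top. (g has_real_derivative g' r) (at r)"
    using eventually_gt_at_top[of 0]
  proof eventually_elim
    case (elim r)
    show ?case unfolding g_def g'_def
      by (rule DERIV_divide[OF DERIV_ident ps_deriv(1)[OF elim]]) (use ps0_pos[OF elim, of n] in simp)
  qed
  have g'nz: "\<forall>\<^sub>F r in at_top. g' r \<noteq> 0"
    using eventually_gt_at_top[of 0]
  proof eventually_elim
    case (elim r)
    have "1 * ps0 n r - r * ps1 n r > 0" using psdiff[of r] Expos[OF elim] by simp
    thus ?case unfolding g'_def using ps0_pos[OF elim, of n] by simp
  qed
  have ginf: "filterlim g at_top at_top"
  proof (rule filterlim_at_top_mono[OF filterlim_ident])
    show "\<forall>\<^sub>F r in at_top. r \<le> g r"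
      using eventually_ge_at_top[of 2]
    proof eventually_elim
      case (elim r)
      have r: "r > 0" using elim by simp
      have "ps0 n r \<le> 1" "ps0 n r > 0" using ps0_le1[OF elim] ps0_pos[OF r] by auto
      thus ?case unfolding g_def using r by (simp add: le_divide_eq)
    qed
  qed
  have ratio: "\<forall>\<^sub>F r in at_top. f' r / g' r = - c0 / (2 powr (real n - 1) * ((r^2/4) powr (aN n - 1) * Ex r))"
    using eventually_ge_at_top[of R]
  proof eventually_elim
    case (elim r)
    have r: "r > 0" using elim R by simp
    have p0: "ps0 n r \<noteq> 0" using ps0_pos[OF r, of n] by simp
    have "f' r / g' r = (y1 r * ps0 n r - y r * ps1 n r) / (1 * ps0 n r - r * ps1 n r)"
      unfolding f'_def g'_def using p0 by simp
    also have "y1 r * ps0 n r - y r * ps1 n r = - (c0 * exp (- P r))"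
      using W[OF elim] by (simp add: algebra_simps)
    also have "1 * ps0 n r - r * ps1 n r = exp (- (r^2/4)) * Ex r" using psdiff[of r] by simp
    also have "exp (- P r) = exp (- (r^2/4)) / r powr (real n - 1)"
    proof -
      have "exp (- P r) = exp (- (r^2/4) - (real n - 1) * ln r)"
        by (rule arg_cong[where f=exp]) (simp add: P_def)
      also have "\<dots> = exp (- (r^2/4)) / exp ((real n - 1) * ln r)" by (rule exp_diff)
      also have "exp ((real n - 1) * ln r) = r powr (real n - 1)" using r by (simp add: powr_def)
      finally show ?thesis .
    qed
    also have "r powr (real n - 1) = 2 powr (real n - 1) * ((r^2/4) powr (aN n - 1))"
      by (rule rpow_split[OF r])
    finally show ?case using Expos[OF r] by (simp add: field_simps)
  qed
  have ratio_lim: "((\<lambda>r. - c0 / (2 powr (real n - 1) * ((r^2/4) powr (aN n - 1) * Ex r))) \<longlongrightarrow> V) at_top"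
  proof -
    have s: "filterlim (\<lambda>r::real. r^2/4) at_top at_top" by real_asymp
    have "((\<lambda>r. (r^2/4) powr (aN n - 1) * Ex r) \<longlongrightarrow> 2) at_top"
      unfolding Ex_def using filterlim_compose[OF Dexpr_lim s] by (simp add: mult_ac)
    hence "((\<lambda>r. - c0 / (2 powr (real n - 1) * ((r^2/4) powr (aN n - 1) * Ex r))) \<longlongrightarrow> - c0 / (2 powr (real n - 1) * 2)) at_top"
      by (intro tendsto_intros) auto
    thus ?thesis unfolding V_def .
  qed
  have "((\<lambda>r. f r / g r) \<longlongrightarrow> V) at_top"
    by (rule lhospital_at_top_at_top[OF ginf g'nz Df Dg]) (rule Lim_transform_eventually[OF ratio_lim], use ratio in \<open>auto elim: eventually_mono\<close>)
  moreover have "\<forall>\<^sub>F r in at_top. f r / g r = explicitU n R r / r"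
    using eventually_gt_at_top[of 0]
  proof eventually_elim
    case (elim r)
    thus ?case unfolding f_def g_def y_def using ps0_pos[OF elim, of n] by simp
  qed
  ultimately have lim: "((\<lambda>r. explicitU n R r / r) \<longlongrightarrow> V) at_top" by (rule Lim_transform_eventually)
  have "V = R ^ (n - 1) / 2 powr (real n - 1/2) * tricomiU ((real n + 1) / 2) (real n / 2) (R^2/4)"
  proof -
    have Rp: "R powr (real n - 1) = R ^ (n - 1)" using R n by (simp add: powr_realpow[symmetric] of_nat_diff)
    have tp: "2 powr (real n - 1/2) = 2 powr (real n - 1) * sqrt 2"
      by (simp add: powr_add[symmetric] powr_half_sqrt[symmetric])
    have s2: "sqrt 2 * sqrt 2 = (2::real)" by simp
    have "V = sqrt 2 * UR * R ^ (n - 1) / (2 powr (real n - 1) * (sqrt 2 * sqrt 2))"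
      unfolding V_def c0v Rp s2 by simp
    also have "\<dots> = R ^ (n - 1) / (2 powr (real n - 1) * sqrt 2) * UR" by (simp add: field_simps)
    finally show ?thesis unfolding tp UR_def tricomiU_Uf .
  qed
  with lim show ?thesis by simp
qed

lemma gen_lin:
  assumes "(A::real) + p * B - C / 2 = 0" "A' + p * B' - C' / 2 = 0"
  shows "(A - A') + p * (B - B') - (C - C') / 2 = 0"
proof -
  have "(A - A') + p * (B - B') - (C - C') / 2 = (A + p * B - C / 2) - (A' + p * B' - C' / 2)"
    by (simp add: algebra_simps diff_divide_distrib)
  thus ?thesis using assms by simp
qed

theorem lemma6p3:
  fixes n :: nat and R :: real
  assumes "n \<ge> 1" and "R > 0"
  shows "is_solution n R (explicitU n R)
    \<and> (\<forall>V. is_solution n R V \<longrightarrow> (\<forall>r\<ge>R. V r = explicitU n R r))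
    \<and> (\<forall>r>R. explicitU n R r > 0)
    \<and> strict_mono_on {R<..} (explicitU n R)
    \<and> ((\<lambda>r. explicitU n R r / r) \<longlongrightarrow>
         R ^ (n - 1) / 2 powr (real n - 1/2) * tricomiU ((real n + 1) / 2) (real n / 2) (R^2/4)) at_top"
proof -
  note n = assms(1) and R = assms(2)
  define y where "y = explicitU n R"
  define y1 where "y1 = Y1f n R"
  define y2 where "y2 = Y2f n R"
  have d1: "\<And>r. r > 0 \<Longrightarrow> (y has_real_derivative y1 r) (at r)"
    unfolding y_def y1_def using sol_deriv(1)[OF n R] .
  have d2: "\<And>r. r > 0 \<Longrightarrow> (y1 has_real_derivative y2 r) (at r)"
    unfolding y2_def y1_def using sol_deriv(2)[OF n R] .
  have ode: "\<And>r. r > 0 \<Longrightarrow> y2 r + ((real n - 1) / r + r / 2) * y1 r - y r / 2 = 0"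
    unfolding y_def y1_def y2_def using sol_deriv(3)[OF n R] .
  have y0: "y R = 0" unfolding y_def by (rule explicitU_R)
  have y10: "y1 R = sqrt 2" unfolding y1_def by (rule Y1f_R[OF n R])
  have y10pos: "y1 R > 0" unfolding y10 by simp
  have pos: "\<forall>r\<ge>R. y1 r > 0"
    by (rule ode_pos[OF R d1 d2 ode y0 y10pos])
  note PC = ode_pos_conseq[OF R d1 pos y0]
  have yc: "continuous_on {R..} y"
  proof (rule continuous_at_imp_continuous_on, intro ballI)
    fix x assume "x \<in> {R..}" hence "x > 0" using R by simp
    thus "isCont y x" using DERIV_isCont[OF d1] by blast
  qed
  have yright: "(y has_real_derivative sqrt 2) (at_right R)"
    using d1[OF R] y10 by (auto intro: has_field_derivative_at_within)
  have sol: "is_solution n R y"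
    unfolding is_solution_def
  proof (intro conjI)
    show "continuous_on {R..} y" by (rule yc)
    show "\<exists>U1 U2. (\<forall>r>R. (y has_real_derivative U1 r) (at r) \<and> (U1 has_real_derivative U2 r) (at r)
                      \<and> U2 r + ((real n - 1) / r + r / 2) * U1 r - y r / 2 = 0)
             \<and> continuous_on {R<..} U2"
    proof (intro exI conjI allI impI)
      fix r assume "r > R" hence r: "r > 0" using R by simp
      show "(y has_real_derivative y1 r) (at r)" by (rule d1[OF r])
      show "(y1 has_real_derivative y2 r) (at r)" by (rule d2[OF r])
      show "y2 r + ((real n - 1) / r + r / 2) * y1 r - y r / 2 = 0" by (rule ode[OF r])
    next
      show "continuous_on {R<..} y2" unfolding y2_def
        by (rule continuous_on_subset[OF Y2f_cont[OF n R]]) (use R in auto)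
    qed
    show "\<forall>r\<ge>R. 0 \<le> y r" using PC(3) by blast
    show "y R = 0" by (rule y0)
    show "(y has_real_derivative sqrt 2) (at_right R)" by (rule yright)
  qed
  have uniq: "\<forall>V. is_solution n R V \<longrightarrow> (\<forall>r\<ge>R. V r = y r)"
  proof (intro allI impI)
    fix V assume "is_solution n R V"
    then obtain V1 V2 where Vc: "continuous_on {R..} V"
      and Vd: "\<And>r. r > R \<Longrightarrow> (V has_real_derivative V1 r) (at r) \<and> (V1 has_real_derivative V2 r) (at r)
                      \<and> V2 r + ((real n - 1) / r + r / 2) * V1 r - V r / 2 = 0"
      and V0: "V R = 0" and Vr: "(V has_real_derivative sqrt 2) (at_right R)"
      unfolding is_solution_def by blast
    have c: "continuous_on {R..} (\<lambda>r. V r - y r)" using Vc yc by (intro continuous_intros)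
    have e1: "((\<lambda>r. V r - y r) has_real_derivative (\<lambda>r. V1 r - y1 r) r) (at r)" if "r > R" for r
      using Vd[OF that] d1[of r] that R by (auto intro!: DERIV_diff)
    have e2: "((\<lambda>r. V1 r - y1 r) has_real_derivative (\<lambda>r. V2 r - y2 r) r) (at r)" if "r > R" for r
      using Vd[OF that] d2[of r] that R by (auto intro!: DERIV_diff)
    have e3: "(\<lambda>r. V2 r - y2 r) r + ((real n - 1) / r + r / 2) * (\<lambda>r. V1 r - y1 r) r - (\<lambda>r. V r - y r) r / 2 = 0"
      if "r > R" for r
    proof -
      have "V2 r + ((real n - 1) / r + r / 2) * V1 r - V r / 2 = 0" using Vd[OF that] by blast
      moreover have "y2 r + ((real n - 1) / r + r / 2) * y1 r - y r / 2 = 0" using ode[of r] that R by simp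
      ultimately show ?thesis using gen_lin by simp
    qed
    have e4: "(\<lambda>r. V r - y r) R = 0" using V0 y0 by simp
    have e5: "((\<lambda>r. V r - y r) has_real_derivative 0) (at_right R)"
      using DERIV_diff[OF Vr yright] by simp
    note Z = ode_unique[OF n R c e1 e2 e3 e4 e5]
    fix r assume "r \<ge> R" thus "V r = y r" using Z[of r] by simp
  qed
  show ?thesis
    using sol uniq PC(1) PC(2) explicit_limit[OF n R] unfolding y_def by blast
qed

end
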